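(* Under the standing assumptions below, fix $\gamma\in\mathbb R^I_+$, $x_0\in\mathcal X$, $s_0\in\mathcal S$, and define $f:\tilde{\mathcal A}^\infty(x_0)\to\mathbb R$ by $f(a)=\mathbb E_{s_0}\sum_{t\ge0}\beta^t\big(r(x(s^t),a(s^t),s_t)+\sum_i\gamma^ig^i(x(s^t),a(s^t),s_t)\big)$ and $g:\tilde{\mathcal A}^\infty(x_0)\to\ell^\infty$ (indexed by $(t,h^t,i)$, $h^t=(s_0,\tilde a_0,\dots,s_{t-1},\tilde a_{t-1},s_t)\in\mathcal H^t$) by $$g_{t,h^t,i}(a)=\mathbf 1\{(a(s^0),\dots,a(s^{t-1}))=(\tilde a_0,\dots,\tilde a_{t-1})\}\Big(\mathbb E_{s_t}\sum_{n\ge0}\beta^ng^i(x(s^{t+n}),a(s^{t+n}),s_{t+n})-\bar g^i\Big).$$ Let $d=\inf_{\lambda\in(\ell^\infty)^*_+}\sup_{a\in\tilde{\mathcal A}^\infty(x_0)}\big(f(a)+\langle\lambda,g(a)\rangle\big)$, where $(\ell^\infty)^*_+$ is the set of positive continuous linear functionals on $\ell^\infty$. Then $d=D(\gamma,x_0,s_0)=\inf_{\lambda\in\Lambda}\sup_{a\in\tilde{\mathcal A}^\infty(x_0)}L(a,\lambda;\gamma,x_0,s_0)$.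
   Context: Setup. Let $\mathcal S$ be a finite set and $(s_t)_{t\ge0}$ a Markov chain on $\mathcal S$ with transition probabilities $\pi(s'|s)>0$ for all $s,s'\in\mathcal S$; for $s^t=(s_0,\dots,s_t)\in\mathcal S^{t+1}$ write $\pi^t(s^t|s_0)$ for its probability given $s_0$ and $\mathbb E_{s_t}$ for expectation over future shocks given $s^t$. Let $\mathcal A\subset\mathbb R^n$ be a finite set, $\mathcal X\subseteq\mathbb R^m$ a countable set, $\zeta:\mathcal X\times\mathcal A\times\mathcal S\to\mathcal X$, $p:\mathcal X\times\mathcal A\times\mathcal S\to\mathbb R$, $r,g^1,\dots,g^I$ bounded real functions on $\mathcal X\times\mathcal A\times\mathcal S$, $\bar g^i\in\mathbb R$, $\beta\in(0,1)$. A plan is $a=(a(s^t))_{t,s^t}$, $a(s^t)\in\mathcal A$, inducing $x(s^0)=x_0$, $x(s^{t+1})=\zeta(x(s^t),a(s^t),s_t)$. $\tilde{\mathcal A}(x,s)=\{a\in\mathcal A:p(x,a,s)\ge0\}$; $\tilde{\mathcal A}^\infty(x_0)$ is the set of plans with $a(s^t)\in\tilde{\mathcal A}(x(s^t),s_t)$ for all $t,s^t$. A plan is feasible for $(x_0,s_0)$ if it lies in $\tilde{\mathcal A}^\infty(x_0)$ and $\mathbb E_{s_t}\sum_{n\ge0}\beta^ng^i(x(s^{t+n}),a(s^{t+n}),s_{t+n})\ge\bar g^i$ for all $t,s^t,i$. Standing assumption: for every $(x_0,s_0)$ a feasible plan exists. Pre-action histories $h^t=(s_0,a_0,\dots,s_{t-1},a_{t-1},s_t)\in\mathcal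 H^t=\mathcal S^{t+1}\times\mathcal A^t$; a plan generates $h^t=(s_0,a(s^0),\dots,a(s^{t-1}),s_t)$ along $s^t$. Dual value: $\Lambda$ is the set of $(\lambda^i(h^t))_{t,h^t,i}$, $\lambda^i(h^t)\ge0$, $\sum_t\sum_{h^t}\sum_i\beta^t\lambda^i(h^t)\pi^t(s^t|s_0)<\infty$. $L(a,\lambda;\gamma,x_0,s_0)=\mathbb E_{s_0}\sum_t\beta^t\big[r(x(s^t),a(s^t),s_t)+\sum_i\gamma^ig^i(x(s^t),a(s^t),s_t)+\sum_i\lambda^i(h^t)(\sum_{n\ge0}\beta^ng^i(x(s^{t+n}),a(s^{t+n}),s_{t+n})-\bar g^i)\big]$ (with $h^t$ generated by the plan) and $D(\gamma,x_0,s_0)=\inf_{\lambda\in\Lambda}\sup_{a\in\tilde{\mathcal A}^\infty(x_0)}L$. *)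

theory Defs
  imports "HOL-Analysis.Analysis"
begin

(* Shock histories s^t = (s_0,...,s_t) are nonempty lists [s_0,...,s_t].
   P s s' is the transition probability pi(s'|s). *)

fun pprob :: "('s \<Rightarrow> 's \<Rightarrow> real) \<Rightarrow> 's \<Rightarrow> 's list \<Rightarrow> real" where
  "pprob P s [] = 1"
| "pprob P s (e # es) = P s e * pprob P e es"

definition condE :: "('s \<Rightarrow> 's \<Rightarrow> real) \<Rightarrow> 's list \<Rightarrow> nat \<Rightarrow> ('s list \<Rightarrow> real) \<Rightarrow> real" where
  "condE P ss n \<phi> = (\<Sum>es\<in>{es. length es = n}. pprob P (last ss) es * \<phi> (ss @ es))"

definition pit :: "('s \<Rightarrow> 's \<Rightarrow> real) \<Rightarrow> 's \<Rightarrow> 's list \<Rightarrow> real" where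
  "pit P s0 ss = (if ss \<noteq> [] \<and> hd ss = s0 then pprob P s0 (tl ss) else 0)"

primrec xseq :: "('x \<Rightarrow> 'a \<Rightarrow> 's \<Rightarrow> 'x) \<Rightarrow> ('s list \<Rightarrow> 'a) \<Rightarrow> 'x \<Rightarrow> 's list \<Rightarrow> nat \<Rightarrow> 'x" where
  "xseq \<zeta> a x0 ss 0 = x0"
| "xseq \<zeta> a x0 ss (Suc k) = \<zeta> (xseq \<zeta> a x0 ss k) (a (take (Suc k) ss)) (ss ! k)"

definition xst :: "('x \<Rightarrow> 'a \<Rightarrow> 's \<Rightarrow> 'x) \<Rightarrow> ('s list \<Rightarrow> 'a) \<Rightarrow> 'x \<Rightarrow> 's list \<Rightarrow> 'x" where
  "xst \<zeta> a x0 ss = xseq \<zeta> a x0 ss (length ss - 1)"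

definition cont :: "('x \<Rightarrow> 'a \<Rightarrow> 's \<Rightarrow> 'x) \<Rightarrow> ('s \<Rightarrow> 's \<Rightarrow> real) \<Rightarrow> real \<Rightarrow> ('x \<Rightarrow> 'a \<Rightarrow> 's \<Rightarrow> real)
     \<Rightarrow> ('s list \<Rightarrow> 'a) \<Rightarrow> 'x \<Rightarrow> 's list \<Rightarrow> real" where
  "cont \<zeta> P \<beta> h a x0 ss =
     (\<Sum>n. \<beta> ^ n * condE P ss n (\<lambda>ss'. h (xst \<zeta> a x0 ss') (a ss') (last ss')))"

definition Atil :: "'a set \<Rightarrow> ('x \<Rightarrow> 'a \<Rightarrow> 's \<Rightarrow> real) \<Rightarrow> 'x \<Rightarrow> 's \<Rightarrow> 'a set" where
  "Atil A p x s = {a\<in>A. p x a s \<ge> 0}"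

definition Ainf :: "'a set \<Rightarrow> ('x \<Rightarrow> 'a \<Rightarrow> 's \<Rightarrow> real) \<Rightarrow> ('x \<Rightarrow> 'a \<Rightarrow> 's \<Rightarrow> 'x) \<Rightarrow> 'x
     \<Rightarrow> ('s list \<Rightarrow> 'a) set" where
  "Ainf A p \<zeta> x0 = {a. \<forall>ss. ss \<noteq> [] \<longrightarrow> a ss \<in> Atil A p (xst \<zeta> a x0 ss) (last ss)}"

definition feasible :: "'a set \<Rightarrow> ('x \<Rightarrow> 'a \<Rightarrow> 's \<Rightarrow> real) \<Rightarrow> ('x \<Rightarrow> 'a \<Rightarrow> 's \<Rightarrow> 'x)
     \<Rightarrow> ('s \<Rightarrow> 's \<Rightarrow> real) \<Rightarrow> real \<Rightarrow> (nat \<Rightarrow> 'x \<Rightarrow> 'a \<Rightarrow> 's \<Rightarrow> real) \<Rightarrow> (nat \<Rightarrow> real) \<Rightarrow> nat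
     \<Rightarrow> 'x \<Rightarrow> 's \<Rightarrow> ('s list \<Rightarrow> 'a) \<Rightarrow> bool" where
  "feasible A p \<zeta> P \<beta> g gbar I x0 s0 a \<longleftrightarrow>
     a \<in> Ainf A p \<zeta> x0 \<and>
     (\<forall>ss i. ss \<noteq> [] \<and> hd ss = s0 \<and> i < I \<longrightarrow> cont \<zeta> P \<beta> (g i) a x0 ss \<ge> gbar i)"

(* pre-action histories h^t = (s_0,a_0,...,a_{t-1},s_t) as pairs ([s_0..s_t],[a_0..a_{t-1}]) *)
definition Hset :: "'a set \<Rightarrow> nat \<Rightarrow> ('s list \<times> 'a list) set" where
  "Hset A t = {(ss, as). length ss = Suc t \<and> length as = t \<and> set as \<subseteq> A}"

definition gen :: "('s list \<Rightarrow> 'a) \<Rightarrow> 's list \<Rightarrow> 's list \<times> 'a list" where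
  "gen a ss = (ss, map (\<lambda>k. a (take (Suc k) ss)) [0..<length ss - 1])"

definition Jset :: "'a set \<Rightarrow> nat \<Rightarrow> (('s list \<times> 'a list) \<times> nat) set" where
  "Jset A I = {(h, i). (\<exists>t. h \<in> Hset A t) \<and> i < I}"

definition linf :: "'j set \<Rightarrow> ('j \<Rightarrow> real) set" where
  "linf J = {y. (\<exists>B. \<forall>j\<in>J. \<bar>y j\<bar> \<le> B) \<and> (\<forall>j. j \<notin> J \<longrightarrow> y j = 0)}"

definition posdual :: "'j set \<Rightarrow> (('j \<Rightarrow> real) \<Rightarrow> real) set" where
  "posdual J = {\<phi>.
     (\<forall>y\<in>linf J. \<forall>z\<in>linf J. \<phi> (\<lambda>j. y j + z j) = \<phi> y + \<phi> z) \<and>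
     (\<forall>c. \<forall>y\<in>linf J. \<phi> (\<lambda>j. c * y j) = c * \<phi> y) \<and>
     (\<exists>K. \<forall>y\<in>linf J. \<forall>B. (\<forall>j\<in>J. \<bar>y j\<bar> \<le> B) \<longrightarrow> \<bar>\<phi> y\<bar> \<le> K * B) \<and>
     (\<forall>y\<in>linf J. (\<forall>j\<in>J. y j \<ge> 0) \<longrightarrow> \<phi> y \<ge> 0)}"

definition fobj :: "('x \<Rightarrow> 'a \<Rightarrow> 's \<Rightarrow> 'x) \<Rightarrow> ('s \<Rightarrow> 's \<Rightarrow> real) \<Rightarrow> real \<Rightarrow> ('x \<Rightarrow> 'a \<Rightarrow> 's \<Rightarrow> real)
     \<Rightarrow> (nat \<Rightarrow> 'x \<Rightarrow> 'a \<Rightarrow> 's \<Rightarrow> real) \<Rightarrow> nat \<Rightarrow> (nat \<Rightarrow> real) \<Rightarrow> 'x \<Rightarrow> 's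
     \<Rightarrow> ('s list \<Rightarrow> 'a) \<Rightarrow> real" where
  "fobj \<zeta> P \<beta> r g I \<gamma> x0 s0 a =
     (\<Sum>t. \<beta> ^ t * condE P [s0] t (\<lambda>ss.
         r (xst \<zeta> a x0 ss) (a ss) (last ss)
       + (\<Sum>i<I. \<gamma> i * g i (xst \<zeta> a x0 ss) (a ss) (last ss))))"

definition gvec :: "'a set \<Rightarrow> ('x \<Rightarrow> 'a \<Rightarrow> 's \<Rightarrow> 'x) \<Rightarrow> ('s \<Rightarrow> 's \<Rightarrow> real) \<Rightarrow> real
     \<Rightarrow> (nat \<Rightarrow> 'x \<Rightarrow> 'a \<Rightarrow> 's \<Rightarrow> real) \<Rightarrow> (nat \<Rightarrow> real) \<Rightarrow> nat \<Rightarrow> 'x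
     \<Rightarrow> ('s list \<Rightarrow> 'a) \<Rightarrow> ('s list \<times> 'a list) \<times> nat \<Rightarrow> real" where
  "gvec A \<zeta> P \<beta> g gbar I x0 a = (\<lambda>(h, i).
     if (h, i) \<in> Jset A I then
       (if gen a (fst h) = h then 1 else 0) * (cont \<zeta> P \<beta> (g i) a x0 (fst h) - gbar i)
     else 0)"

definition LamSet :: "'a set \<Rightarrow> nat \<Rightarrow> ('s \<Rightarrow> 's \<Rightarrow> real) \<Rightarrow> real \<Rightarrow> 's
     \<Rightarrow> ('s list \<times> 'a list \<Rightarrow> nat \<Rightarrow> real) set" where
  "LamSet A I P \<beta> s0 = {lam.
     (\<forall>t. \<forall>h\<in>Hset A t. \<forall>i<I. lam h i \<ge> 0) \<and>
     summable (\<lambda>t. \<Sum>h\<in>Hset A t. \<Sum>i<I. \<beta> ^ t * lam h i * pit P s0 (fst h))}"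

definition Lagr :: "('x \<Rightarrow> 'a \<Rightarrow> 's \<Rightarrow> 'x) \<Rightarrow> ('s \<Rightarrow> 's \<Rightarrow> real) \<Rightarrow> real \<Rightarrow> ('x \<Rightarrow> 'a \<Rightarrow> 's \<Rightarrow> real)
     \<Rightarrow> (nat \<Rightarrow> 'x \<Rightarrow> 'a \<Rightarrow> 's \<Rightarrow> real) \<Rightarrow> (nat \<Rightarrow> real) \<Rightarrow> nat \<Rightarrow> (nat \<Rightarrow> real) \<Rightarrow> 'x \<Rightarrow> 's
     \<Rightarrow> ('s list \<Rightarrow> 'a) \<Rightarrow> ('s list \<times> 'a list \<Rightarrow> nat \<Rightarrow> real) \<Rightarrow> real" where
  "Lagr \<zeta> P \<beta> r g gbar I \<gamma> x0 s0 a lam =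
     (\<Sum>t. \<beta> ^ t * condE P [s0] t (\<lambda>ss.
         r (xst \<zeta> a x0 ss) (a ss) (last ss)
       + (\<Sum>i<I. \<gamma> i * g i (xst \<zeta> a x0 ss) (a ss) (last ss))
       + (\<Sum>i<I. lam (gen a ss) i * (cont \<zeta> P \<beta> (g i) a x0 ss - gbar i))))"

definition Dval :: "'a set \<Rightarrow> ('x \<Rightarrow> 'a \<Rightarrow> 's \<Rightarrow> real) \<Rightarrow> ('x \<Rightarrow> 'a \<Rightarrow> 's \<Rightarrow> 'x) \<Rightarrow> ('s \<Rightarrow> 's \<Rightarrow> real)
     \<Rightarrow> real \<Rightarrow> ('x \<Rightarrow> 'a \<Rightarrow> 's \<Rightarrow> real) \<Rightarrow> (nat \<Rightarrow> 'x \<Rightarrow> 'a \<Rightarrow> 's \<Rightarrow> real) \<Rightarrow> (nat \<Rightarrow> real) \<Rightarrow> nat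
     \<Rightarrow> (nat \<Rightarrow> real) \<Rightarrow> 'x \<Rightarrow> 's \<Rightarrow> ereal" where
  "Dval A p \<zeta> P \<beta> r g gbar I \<gamma> x0 s0 =
     (INF lam\<in>LamSet A I P \<beta> s0. SUP a\<in>Ainf A p \<zeta> x0. ereal (Lagr \<zeta> P \<beta> r g gbar I \<gamma> x0 s0 a lam))"

end

theory Submission
  imports Defs
begin

lemma pprob_nonneg:
  assumes "\<forall>s s'. P s s' > 0" shows "pprob P s es \<ge> 0"
proof (induction es arbitrary: s)
  case (Cons e es) then show ?case using assms by (simp add: less_imp_le)
qed simp

lemma finite_len: "finite {es::'s::finite list. length es = n}"
  using finite_lists_length_eq[of "UNIV::'s set" n] by simp

lemma len_Suc_eq: "{es::'s list. length es = Suc n} = (\<lambda>(e,es). e # es) ` (UNIV \<times> {es. length es = n})"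
  by (auto simp: length_Suc_conv image_iff)

lemma sum_len_Suc:
  fixes F :: "'s::finite list \<Rightarrow> real"
  shows "(\<Sum>es\<in>{es. length es = Suc n}. F es) = (\<Sum>e\<in>UNIV. \<Sum>es\<in>{es. length es = n}. F (e # es))"
proof -
  have "inj_on (\<lambda>(e,es). e # es) (UNIV \<times> {es::'s list. length es = n})"
    by (auto simp: inj_on_def)
  then have "(\<Sum>es\<in>{es. length es = Suc n}. F es) = (\<Sum>x\<in>UNIV \<times> {es. length es = n}. F (case x of (e, es) \<Rightarrow> e # es))"
    unfolding len_Suc_eq by (subst sum.reindex) (auto simp: o_def)
  also have "\<dots> = (\<Sum>e\<in>UNIV. \<Sum>es\<in>{es. length es = n}. F (e # es))"
    unfolding sum.cartesian_product by (simp add: case_prod_unfold)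
  finally show ?thesis .
qed

lemma sum_pprob:
  fixes P :: "'s::finite \<Rightarrow> 's \<Rightarrow> real"
  assumes "\<forall>s. (\<Sum>s'\<in>UNIV. P s s') = 1"
  shows "(\<Sum>es\<in>{es. length es = n}. pprob P s es) = 1"
proof (induction n arbitrary: s)
  case 0
  have "{es::'s list. length es = 0} = {[]}" by auto
  then show ?case by simp
next
  case (Suc n)
  show ?case unfolding sum_len_Suc
    by (simp add: sum_distrib_left[symmetric] Suc assms)
qed

lemma condE_abs_le:
  fixes P :: "'s::finite \<Rightarrow> 's \<Rightarrow> real"
  assumes "\<forall>s s'. P s s' > 0" "\<forall>s. (\<Sum>s'\<in>UNIV. P s s') = 1"
    and "\<And>es. length es = n \<Longrightarrow> \<bar>\<phi> (ss @ es)\<bar> \<le> B"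
  shows "\<bar>condE P ss n \<phi>\<bar> \<le> B"
proof -
  have "\<bar>condE P ss n \<phi>\<bar> \<le> (\<Sum>es\<in>{es. length es = n}. \<bar>pprob P (last ss) es * \<phi> (ss @ es)\<bar>)"
    unfolding condE_def by (rule sum_abs)
  also have "\<dots> \<le> (\<Sum>es\<in>{es. length es = n}. pprob P (last ss) es * B)"
    using assms pprob_nonneg[OF assms(1)]
    by (intro sum_mono) (auto simp: abs_mult intro: mult_left_mono)
  also have "\<dots> = B" using sum_pprob[OF assms(2)] by (simp add: sum_distrib_right[symmetric])
  finally show ?thesis .
qed

lemma condE_diff: "condE P ss n \<phi> - condE P ss n \<psi> = condE P ss n (\<lambda>x. \<phi> x - \<psi> x)"
  unfolding condE_def by (simp add: sum_subtractf right_diff_distrib)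

lemma condE_add: "condE P ss n \<phi> + condE P ss n \<psi> = condE P ss n (\<lambda>x. \<phi> x + \<psi> x)"
  unfolding condE_def by (simp add: sum.distrib distrib_left)

lemma condE_cong: "(\<And>es. length es = n \<Longrightarrow> \<phi> (ss @ es) = \<psi> (ss @ es)) \<Longrightarrow> condE P ss n \<phi> = condE P ss n \<psi>"
  unfolding condE_def by (rule sum.cong) auto

lemma xseq_cong:
  "(\<And>j. j < k \<Longrightarrow> a (take (Suc j) ss) = a' (take (Suc j) ss') \<and> ss ! j = ss' ! j)
   \<Longrightarrow> xseq \<zeta> a x0 ss k = xseq \<zeta> a' x0 ss' k"
  by (induction k) auto

lemma xseq_shift:
  "c \<le> length ss \<Longrightarrow> xseq \<zeta> a x0 ss (c + k) = xseq \<zeta> (\<lambda>l. a (take c ss @ l)) (xseq \<zeta> a x0 ss c) (drop c ss) k"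
proof (induction k)
  case 0 then show ?case by simp
next
  case (Suc k)
  have "take (c + Suc k) ss = take c ss @ take (Suc k) (drop c ss)" by (rule take_add)
  then show ?case using Suc by simp
qed

lemma xseq_X:
  assumes "ss \<noteq> []" "a \<in> Ainf A p \<zeta> x0" "x0 \<in> X" "\<forall>x\<in>X. \<forall>a\<in>A. \<forall>s. \<zeta> x a s \<in> X"
  shows "xseq \<zeta> a x0 ss k \<in> X"
proof (induction k)
  case 0 then show ?case using assms by simp
next
  case (Suc k)
  have "a (take (Suc k) ss) \<in> A" using assms(1,2) unfolding Ainf_def Atil_def by auto
  then show ?case using Suc assms(4) by simp
qed

lemma xst_X:
  assumes "ss \<noteq> []" "a \<in> Ainf A p \<zeta> x0" "x0 \<in> X" "\<forall>x\<in>X. \<forall>a\<in>A. \<forall>s. \<zeta> x a s \<in> X"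
  shows "xst \<zeta> a x0 ss \<in> X"
  unfolding xst_def using xseq_X[OF assms] .

lemma Ainf_A: "a \<in> Ainf A p \<zeta> x0 \<Longrightarrow> ss \<noteq> [] \<Longrightarrow> a ss \<in> A"
  unfolding Ainf_def Atil_def by auto

lemma geom_tail_bound:
  fixes u :: "nat \<Rightarrow> real" and \<beta> B :: real
  assumes b: "0 < \<beta>" "\<beta> < 1" and u: "\<And>n. \<bar>u n\<bar> \<le> (if n < N then 0 else B * \<beta> ^ n)"
  shows "summable u" "\<bar>suminf u\<bar> \<le> B * \<beta> ^ N / (1 - \<beta>)"
proof -
  have "0 \<le> B * \<beta> ^ N" using u[of N] abs_ge_zero[of "u N"] by simp
  moreover have "\<beta> ^ N > 0" using b by simp
  ultimately have B: "0 \<le> B" by (simp add: zero_le_mult_iff)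
  have sg: "summable (\<lambda>n. B * \<beta> ^ n)" using b by (intro summable_mult summable_geometric) auto
  have sv: "summable (\<lambda>n. if n < N then 0 else B * \<beta> ^ n)"
    by (rule summable_comparison_test[OF _ sg]) (use B b in auto)
  show su: "summable u" by (rule summable_comparison_test[OF _ sv]) (use u in auto)
  have sa: "summable (\<lambda>n. \<bar>u n\<bar>)" by (rule summable_comparison_test[OF _ sv]) (use u in auto)
  have "\<bar>suminf u\<bar> \<le> (\<Sum>n. \<bar>u n\<bar>)" using summable_norm[of u] sa by simp
  also have "\<dots> \<le> (\<Sum>n. if n < N then 0 else B * \<beta> ^ n)" by (rule suminf_le[OF _ sa sv]) (use u in auto)
  also have "\<dots> = (\<Sum>n. B * \<beta> ^ (n + N))"
    using suminf_split_initial_segment[OF sv, of N] by simp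
  also have "\<dots> = B * \<beta> ^ N / (1 - \<beta>)"
    using b by (simp add: power_add suminf_mult suminf_mult2[symmetric] suminf_geometric mult.assoc
        summable_geometric mult.commute[of _ "\<beta>^N"])
  finally show "\<bar>suminf u\<bar> \<le> B * \<beta> ^ N / (1 - \<beta>)" .
qed

locale dsetup =
  fixes P :: "'s::finite \<Rightarrow> 's \<Rightarrow> real" and A :: "'a set" and X :: "'x set"
    and \<zeta> :: "'x \<Rightarrow> 'a \<Rightarrow> 's \<Rightarrow> 'x" and p r :: "'x \<Rightarrow> 'a \<Rightarrow> 's \<Rightarrow> real"
    and g :: "nat \<Rightarrow> 'x \<Rightarrow> 'a \<Rightarrow> 's \<Rightarrow> real" and gbar \<gamma> :: "nat \<Rightarrow> real"
    and I :: nat and \<beta> :: real and x0 :: 'x and s0 :: 's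
  assumes P_pos: "\<forall>s s'. P s s' > 0"
    and P_sum: "\<forall>s. (\<Sum>s'\<in>UNIV. P s s') = 1"
    and A_fin: "finite A"
    and \<zeta>_X: "\<forall>x\<in>X. \<forall>a\<in>A. \<forall>s. \<zeta> x a s \<in> X"
    and r_bdd: "\<exists>B. \<forall>x\<in>X. \<forall>a\<in>A. \<forall>s. \<bar>r x a s\<bar> \<le> B"
    and g_bdd: "\<forall>i<I. \<exists>B. \<forall>x\<in>X. \<forall>a\<in>A. \<forall>s. \<bar>g i x a s\<bar> \<le> B"
    and \<beta>0: "0 < \<beta>" and \<beta>1: "\<beta> < 1"
    and standing: "\<forall>x0'\<in>X. \<forall>s0'. \<exists>a. feasible A p \<zeta> P \<beta> g gbar I x0' s0' a"
    and \<gamma>_nonneg: "\<forall>i<I. \<gamma> i \<ge> 0"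
    and x0: "x0 \<in> X"
begin

definition "Bf x s = (SOME b. feasible A p \<zeta> P \<beta> g gbar I x s b)"

lemma Bf_feas: "x \<in> X \<Longrightarrow> feasible A p \<zeta> P \<beta> g gbar I x s (Bf x s)"
  unfolding Bf_def using standing by (metis someI_ex)

definition "Br = (SOME B. \<forall>x\<in>X. \<forall>a\<in>A. \<forall>s. \<bar>r x a s\<bar> \<le> B)"
lemma Br: "x \<in> X \<Longrightarrow> a \<in> A \<Longrightarrow> \<bar>r x a s\<bar> \<le> Br"
  unfolding Br_def using someI_ex[OF r_bdd] by blast

definition "Bgi i = (SOME B. \<forall>x\<in>X. \<forall>a\<in>A. \<forall>s. \<bar>g i x a s\<bar> \<le> B)"
lemma Bgi: "i < I \<Longrightarrow> x \<in> X \<Longrightarrow> a \<in> A \<Longrightarrow> \<bar>g i x a s\<bar> \<le> Bgi i"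
  unfolding Bgi_def using someI_ex[OF g_bdd[rule_format]] by blast

definition "G0 = (\<Sum>i<I. \<bar>Bgi i\<bar>)"
lemma G0: "i < I \<Longrightarrow> x \<in> X \<Longrightarrow> a \<in> A \<Longrightarrow> \<bar>g i x a s\<bar> \<le> G0"
proof -
  assume h: "i < I" "x \<in> X" "a \<in> A"
  have "\<bar>Bgi i\<bar> \<le> G0" unfolding G0_def using h(1)
    by (intro member_le_sum) auto
  then show ?thesis using Bgi[OF h, of s] by linarith
qed

lemma G0_nonneg: "0 \<le> G0" unfolding G0_def by (simp add: sum_nonneg)

definition "Rb = \<bar>Br\<bar> + (\<Sum>i<I. \<gamma> i) * G0"

definition "Rf a ss = r (xst \<zeta> a x0 ss) (a ss) (last ss) + (\<Sum>i<I. \<gamma> i * g i (xst \<zeta> a x0 ss) (a ss) (last ss))"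

lemma Rf_bd: "a \<in> Ainf A p \<zeta> x0 \<Longrightarrow> ss \<noteq> [] \<Longrightarrow> \<bar>Rf a ss\<bar> \<le> Rb"
proof -
  assume a: "a \<in> Ainf A p \<zeta> x0" and ss: "ss \<noteq> []"
  have X: "xst \<zeta> a x0 ss \<in> X" by (rule xst_X[OF ss a x0 \<zeta>_X])
  have AA: "a ss \<in> A" by (rule Ainf_A[OF a ss])
  have "\<bar>\<Sum>i<I. \<gamma> i * g i (xst \<zeta> a x0 ss) (a ss) (last ss)\<bar> \<le> (\<Sum>i<I. \<bar>\<gamma> i * g i (xst \<zeta> a x0 ss) (a ss) (last ss)\<bar>)"
    by (rule sum_abs)
  also have "\<dots> \<le> (\<Sum>i<I. \<gamma> i * G0)"
    using \<gamma>_nonneg G0[OF _ X AA] by (intro sum_mono) (auto simp: abs_mult intro!: mult_left_mono)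
  finally show ?thesis unfolding Rf_def Rb_def using Br[OF X AA, of "last ss"]
    by (simp add: sum_distrib_right)
qed

definition "gint i a ss = g i (xst \<zeta> a x0 ss) (a ss) (last ss)"

lemma gint_bd: "a \<in> Ainf A p \<zeta> x0 \<Longrightarrow> ss \<noteq> [] \<Longrightarrow> i < I \<Longrightarrow> \<bar>gint i a ss\<bar> \<le> G0"
  unfolding gint_def using G0 xst_X[OF _ _ x0 \<zeta>_X] Ainf_A by metis

lemma cont_eq: "cont \<zeta> P \<beta> (g i) a x0 ss = (\<Sum>n. \<beta> ^ n * condE P ss n (gint i a))"
  unfolding cont_def gint_def ..

lemma cont_bd:
  assumes "a \<in> Ainf A p \<zeta> x0" "ss \<noteq> []" "i < I"
  shows "summable (\<lambda>n. \<beta> ^ n * condE P ss n (gint i a))" "\<bar>cont \<zeta> P \<beta> (g i) a x0 ss\<bar> \<le> G0 / (1 - \<beta>)"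
proof -
  have "\<bar>\<beta> ^ n * condE P ss n (gint i a)\<bar> \<le> (if n < 0 then 0 else G0 * \<beta> ^ n)" for n
  proof -
    have "\<bar>condE P ss n (gint i a)\<bar> \<le> G0"
      by (rule condE_abs_le[OF P_pos P_sum]) (use gint_bd assms in auto)
    then show ?thesis using \<beta>0 by (simp add: abs_mult mult.commute mult_left_mono)
  qed
  from geom_tail_bound[OF \<beta>0 \<beta>1 this] show "summable (\<lambda>n. \<beta> ^ n * condE P ss n (gint i a))"
    "\<bar>cont \<zeta> P \<beta> (g i) a x0 ss\<bar> \<le> G0 / (1 - \<beta>)" by (simp_all add: cont_eq)
qed

definition "Cg = G0 / (1 - \<beta>) + (\<Sum>i<I. \<bar>gbar i\<bar>)"

lemma contg_bd:
  assumes "a \<in> Ainf A p \<zeta> x0" "ss \<noteq> []" "i < I"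
  shows "\<bar>cont \<zeta> P \<beta> (g i) a x0 ss - gbar i\<bar> \<le> Cg"
proof -
  have "\<bar>gbar i\<bar> \<le> (\<Sum>i<I. \<bar>gbar i\<bar>)" using assms(3) by (intro member_le_sum) auto
  then show ?thesis using cont_bd(2)[OF assms] unfolding Cg_def by linarith
qed

lemma Cg_nonneg: "0 \<le> Cg" unfolding Cg_def using G0_nonneg \<beta>1 by (simp add: sum_nonneg)

end

context dsetup begin

definition "cutp T ss = (if hd ss = s0 then T else 0)"

definition "spl T a ss = (if length ss \<le> cutp T ss then a ss
   else Bf (xst \<zeta> a x0 (take (Suc (cutp T ss)) ss)) (ss ! cutp T ss) (drop (cutp T ss) ss))"

lemma cutp_take: "ss \<noteq> [] \<Longrightarrow> cutp T (take (Suc k) ss) = cutp T ss"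
  unfolding cutp_def by (cases ss) auto

lemma cutp_app: "ss \<noteq> [] \<Longrightarrow> cutp T (ss @ es) = cutp T ss"
  unfolding cutp_def by (cases ss) auto

lemma xst_take: assumes "k < length ss" shows "xst \<zeta> a x0 (take (Suc k) ss) = xseq \<zeta> a x0 ss k"
proof -
  have "xseq \<zeta> a x0 (take (Suc k) ss) k = xseq \<zeta> a x0 ss k" by (rule xseq_cong) (use assms in auto)
  moreover have "length (take (Suc k) ss) - 1 = k" using assms by simp
  ultimately show ?thesis unfolding xst_def by simp
qed

lemma spl_agree_x:
  assumes "ss \<noteq> []" "length ss \<le> Suc (cutp T ss)"
  shows "xst \<zeta> (spl T a) x0 ss = xst \<zeta> a x0 ss"
  unfolding xst_def
proof (rule xseq_cong)
  fix j assume j: "j < length ss - 1"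
  have "cutp T (take (Suc j) ss) = cutp T ss" by (rule cutp_take[OF assms(1)])
  then show "spl T a (take (Suc j) ss) = a (take (Suc j) ss) \<and> ss ! j = ss ! j"
    using j assms(2) unfolding spl_def by auto
qed

lemma spl_agree_a:
  assumes "length ss \<le> cutp T ss"
  shows "spl T a ss = a ss"
  using assms unfolding spl_def by auto

lemma spl_after:
  fixes T a
  assumes ss: "ss \<noteq> []" and c: "cutp T ss < length ss"
  defines "x' \<equiv> xst \<zeta> a x0 (take (Suc (cutp T ss)) ss)"
  defines "b \<equiv> Bf x' (ss ! cutp T ss)"
  shows "xst \<zeta> (spl T a) x0 ss = xst \<zeta> b x' (drop (cutp T ss) ss)"
    "spl T a ss = b (drop (cutp T ss) ss)"
proof -
  define c where "c = cutp T ss"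
  have cl: "c < length ss" using c c_def by simp
  show "spl T a ss = b (drop (cutp T ss) ss)" using c unfolding spl_def b_def x'_def by simp
  have len: "length ss - 1 = c + (length ss - 1 - c)" using cl by simp
  have "xst \<zeta> (spl T a) x0 ss = xseq \<zeta> (spl T a) x0 ss (c + (length ss - 1 - c))"
    unfolding xst_def using len by simp
  also have "\<dots> = xseq \<zeta> (\<lambda>l. spl T a (take c ss @ l)) (xseq \<zeta> (spl T a) x0 ss c) (drop c ss) (length ss - 1 - c)"
    by (rule xseq_shift) (use cl in simp)
  also have "xseq \<zeta> (spl T a) x0 ss c = x'"
  proof -
    have "xseq \<zeta> (spl T a) x0 ss c = xseq \<zeta> a x0 ss c"
    proof (rule xseq_cong)
      fix j assume "j < c"
      then show "spl T a (take (Suc j) ss) = a (take (Suc j) ss) \<and> ss ! j = ss ! j"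
        using cutp_take[OF ss, of T j] c_def by (intro conjI spl_agree_a) auto
    qed
    also have "\<dots> = x'" unfolding x'_def c_def[symmetric] using xst_take[OF cl] by simp
    finally show ?thesis .
  qed
  also have "xseq \<zeta> (\<lambda>l. spl T a (take c ss @ l)) x' (drop c ss) (length ss - 1 - c)
     = xseq \<zeta> b x' (drop c ss) (length ss - 1 - c)"
  proof (rule xseq_cong)
    fix j assume j: "j < length ss - 1 - c"
    have tk: "take c ss @ take (Suc j) (drop c ss) = take (c + Suc j) ss" using take_add[of c "Suc j" ss] by simp
    have ct: "cutp T (take (c + Suc j) ss) = c" using cutp_take[OF ss, of T "c + j"] c_def by simp
    have lt: "length (take (c + Suc j) ss) = c + Suc j" using j by simp
    have "spl T a (take (c + Suc j) ss) = b (take (Suc j) (drop c ss))"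
      unfolding spl_def ct using lt j
      by (simp add: b_def x'_def c_def[symmetric] min_def drop_take)
    then show "spl T a (take c ss @ take (Suc j) (drop c ss)) = b (take (Suc j) (drop c ss)) \<and>
          drop c ss ! j = drop c ss ! j" using tk by simp
  qed
  also have "\<dots> = xst \<zeta> b x' (drop (cutp T ss) ss)"
    unfolding xst_def c_def by simp
  finally show "xst \<zeta> (spl T a) x0 ss = xst \<zeta> b x' (drop (cutp T ss) ss)" .
qed

lemma spl_Ainf:
  assumes a: "a \<in> Ainf A p \<zeta> x0"
  shows "spl T a \<in> Ainf A p \<zeta> x0"
  unfolding Ainf_def
proof (intro CollectI allI impI)
  fix ss :: "'s list" assume ss: "ss \<noteq> []"
  show "spl T a ss \<in> Atil A p (xst \<zeta> (spl T a) x0 ss) (last ss)"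
  proof (cases "length ss \<le> cutp T ss")
    case True
    then show ?thesis using spl_agree_a[OF True] spl_agree_x[OF ss] a ss unfolding Ainf_def by auto
  next
    case False
    define x' where "x' = xst \<zeta> a x0 (take (Suc (cutp T ss)) ss)"
    have x'X: "x' \<in> X" unfolding x'_def by (rule xst_X[OF _ a x0 \<zeta>_X]) (use ss in simp)
    have f: "Bf x' (ss ! cutp T ss) \<in> Ainf A p \<zeta> x'" using Bf_feas[OF x'X] unfolding feasible_def by simp
    have dn: "drop (cutp T ss) ss \<noteq> []" using False by simp
    have ld: "last (drop (cutp T ss) ss) = last ss" using dn by (simp add: last_drop)
    have "Bf x' (ss ! cutp T ss) (drop (cutp T ss) ss) \<in> Atil A p (xst \<zeta> (Bf x' (ss ! cutp T ss)) x' (drop (cutp T ss) ss)) (last (drop (cutp T ss) ss))"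
      using f dn unfolding Ainf_def by blast
    then show ?thesis using spl_after[OF ss, of T a] False unfolding x'_def[symmetric] ld by simp
  qed
qed

lemma spl_cont_after:
  assumes ss: "ss \<noteq> []" and c: "cutp T ss < length ss" and a: "a \<in> Ainf A p \<zeta> x0" and i: "i < I"
  shows "cont \<zeta> P \<beta> (g i) (spl T a) x0 ss \<ge> gbar i"
proof -
  define c' where "c' = cutp T ss"
  define x' where "x' = xst \<zeta> a x0 (take (Suc c') ss)"
  define b where "b = Bf x' (ss ! c')"
  have x'X: "x' \<in> X" unfolding x'_def by (rule xst_X[OF _ a x0 \<zeta>_X]) (use ss in simp)
  have dn: "drop c' ss \<noteq> []" using c c'_def by simp
  have lst: "last (drop c' ss) = last ss" using dn by (simp add: last_drop)
  have trm: "condE P ss n (\<lambda>ss'. g i (xst \<zeta> (spl T a) x0 ss') (spl T a ss') (last ss'))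
     = condE P (drop c' ss) n (\<lambda>ss'. g i (xst \<zeta> b x' ss') (b ss') (last ss'))" for n
    unfolding condE_def lst
  proof (rule sum.cong[OF refl])
    fix es :: "'s list" assume "es \<in> {es. length es = n}"
    have ss2: "ss @ es \<noteq> []" using ss by simp
    have c2: "cutp T (ss @ es) < length (ss @ es)" using c cutp_app[OF ss, of T es] by simp
    have cc: "cutp T (ss @ es) = c'" using cutp_app[OF ss] c'_def by simp
    have dr: "drop c' (ss @ es) = drop c' ss @ es" using c c'_def by simp
    have tk: "take (Suc c') (ss @ es) = take (Suc c') ss" using c c'_def by simp
    have nth: "(ss @ es) ! c' = ss ! c'" using c c'_def by (simp add: nth_append)
    have lst2: "last (ss @ es) = last (drop c' ss @ es)" using dn by (cases es) (auto simp: lst)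
    show "pprob P (last ss) es * g i (xst \<zeta> (spl T a) x0 (ss @ es)) (spl T a (ss @ es)) (last (ss @ es)) =
          pprob P (last ss) es * g i (xst \<zeta> b x' (drop c' ss @ es)) (b (drop c' ss @ es)) (last (drop c' ss @ es))"
      using spl_after[OF ss2 c2, of a] unfolding cc dr tk nth lst2 x'_def[symmetric] b_def[symmetric]
      by simp
  qed
  have eq: "cont \<zeta> P \<beta> (g i) (spl T a) x0 ss = cont \<zeta> P \<beta> (g i) b x' (drop c' ss)"
    unfolding cont_def trm ..
  have "feasible A p \<zeta> P \<beta> g gbar I x' (ss ! c') b" unfolding b_def by (rule Bf_feas[OF x'X])
  moreover have "hd (drop c' ss) = ss ! c'" using c c'_def by (simp add: hd_drop_conv_nth)
  ultimately have "cont \<zeta> P \<beta> (g i) b x' (drop c' ss) \<ge> gbar i"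
    unfolding feasible_def using dn i by blast
  then show ?thesis using eq by simp
qed

end

context dsetup begin

lemma spl_int_agree:
  assumes "ss \<noteq> []" "length ss \<le> cutp T ss"
  shows "h (xst \<zeta> (spl T a) x0 ss) (spl T a ss) (last ss) = h (xst \<zeta> a x0 ss) (a ss) (last ss)"
  using spl_agree_x[OF assms(1)] spl_agree_a[OF assms(2)] assms(2) by simp

lemma fobj_eq: "fobj \<zeta> P \<beta> r g I \<gamma> x0 s0 a = (\<Sum>t. \<beta> ^ t * condE P [s0] t (Rf a))"
  unfolding fobj_def Rf_def ..

lemma Rf_summable:
  assumes "a \<in> Ainf A p \<zeta> x0"
  shows "summable (\<lambda>t. \<beta> ^ t * condE P [s0] t (Rf a))"
proof -
  have "\<bar>\<beta> ^ n * condE P [s0] n (Rf a)\<bar> \<le> (if n < 0 then 0 else Rb * \<beta> ^ n)" for n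
  proof -
    have "\<bar>condE P [s0] n (Rf a)\<bar> \<le> Rb"
      by (rule condE_abs_le[OF P_pos P_sum]) (use Rf_bd assms in auto)
    then show ?thesis using \<beta>0 by (simp add: abs_mult mult.commute mult_left_mono)
  qed
  from geom_tail_bound(1)[OF \<beta>0 \<beta>1 this] show ?thesis .
qed

lemma gint_summable:
  assumes "a \<in> Ainf A p \<zeta> x0" "ss \<noteq> []" "i < I"
  shows "summable (\<lambda>n. \<beta> ^ n * condE P ss n (gint i a))"
  by (rule cont_bd(1)[OF assms])

lemma cont_spl_close:
  assumes a: "a \<in> Ainf A p \<zeta> x0" and ss: "ss \<noteq> []" and l: "length ss \<le> cutp T ss" and i: "i < I"
  shows "\<bar>cont \<zeta> P \<beta> (g i) (spl T a) x0 ss - cont \<zeta> P \<beta> (g i) a x0 ss\<bar>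
     \<le> 2 * G0 * \<beta> ^ (Suc (cutp T ss) - length ss) / (1 - \<beta>)"
proof -
  have a': "spl T a \<in> Ainf A p \<zeta> x0" by (rule spl_Ainf[OF a])
  define N where "N = Suc (cutp T ss) - length ss"
  have "cont \<zeta> P \<beta> (g i) (spl T a) x0 ss - cont \<zeta> P \<beta> (g i) a x0 ss
     = (\<Sum>n. \<beta> ^ n * condE P ss n (gint i (spl T a)) - \<beta> ^ n * condE P ss n (gint i a))"
    unfolding cont_eq
    by (rule suminf_diff) (use gint_summable[OF a' ss i] gint_summable[OF a ss i] in auto)
  also have "\<dots> = (\<Sum>n. \<beta> ^ n * condE P ss n (\<lambda>x. gint i (spl T a) x - gint i a x))"
    by (simp add: right_diff_distrib[symmetric] condE_diff)
  finally have eq: "cont \<zeta> P \<beta> (g i) (spl T a) x0 ss - cont \<zeta> P \<beta> (g i) a x0 ss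
     = (\<Sum>n. \<beta> ^ n * condE P ss n (\<lambda>x. gint i (spl T a) x - gint i a x))" .
  have "\<bar>\<beta> ^ n * condE P ss n (\<lambda>x. gint i (spl T a) x - gint i a x)\<bar> \<le> (if n < N then 0 else (2 * G0) * \<beta> ^ n)" for n
  proof (cases "n < N")
    case True
    have "condE P ss n (\<lambda>x. gint i (spl T a) x - gint i a x) = condE P ss n (\<lambda>x. 0)"
    proof (rule condE_cong)
      fix es :: "'s list" assume "length es = n"
      then have "length (ss @ es) \<le> cutp T (ss @ es)" using True N_def cutp_app[OF ss, of T es] by simp
      then show "gint i (spl T a) (ss @ es) - gint i a (ss @ es) = 0"
        unfolding gint_def using spl_int_agree[of "ss @ es" T] ss by simp
    qed
    then show ?thesis using True by (simp add: condE_def)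
  next
    case False
    have "\<bar>condE P ss n (\<lambda>x. gint i (spl T a) x - gint i a x)\<bar> \<le> 2 * G0"
    proof (rule condE_abs_le[OF P_pos P_sum])
      fix es :: "'s list" assume "length es = n"
      show "\<bar>gint i (spl T a) (ss @ es) - gint i a (ss @ es)\<bar> \<le> 2 * G0"
        using gint_bd[OF a' _ i, of "ss @ es"] gint_bd[OF a _ i, of "ss @ es"] ss by simp
    qed
    then show ?thesis using False \<beta>0 by (simp add: abs_mult mult.commute mult_left_mono)
  qed
  from geom_tail_bound(2)[OF \<beta>0 \<beta>1 this] show ?thesis unfolding eq N_def by simp
qed

lemma fobj_spl_close:
  assumes a: "a \<in> Ainf A p \<zeta> x0"
  shows "\<bar>fobj \<zeta> P \<beta> r g I \<gamma> x0 s0 (spl T a) - fobj \<zeta> P \<beta> r g I \<gamma> x0 s0 a\<bar> \<le> 2 * Rb * \<beta> ^ T / (1 - \<beta>)"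
proof -
  have a': "spl T a \<in> Ainf A p \<zeta> x0" by (rule spl_Ainf[OF a])
  have "fobj \<zeta> P \<beta> r g I \<gamma> x0 s0 (spl T a) - fobj \<zeta> P \<beta> r g I \<gamma> x0 s0 a
     = (\<Sum>n. \<beta> ^ n * condE P [s0] n (Rf (spl T a)) - \<beta> ^ n * condE P [s0] n (Rf a))"
    unfolding fobj_eq
    by (rule suminf_diff) (use Rf_summable[OF a'] Rf_summable[OF a] in auto)
  also have "\<dots> = (\<Sum>n. \<beta> ^ n * condE P [s0] n (\<lambda>x. Rf (spl T a) x - Rf a x))"
    by (simp add: right_diff_distrib[symmetric] condE_diff)
  finally have eq: "fobj \<zeta> P \<beta> r g I \<gamma> x0 s0 (spl T a) - fobj \<zeta> P \<beta> r g I \<gamma> x0 s0 a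
     = (\<Sum>n. \<beta> ^ n * condE P [s0] n (\<lambda>x. Rf (spl T a) x - Rf a x))" .
  have "\<bar>\<beta> ^ n * condE P [s0] n (\<lambda>x. Rf (spl T a) x - Rf a x)\<bar> \<le> (if n < T then 0 else (2 * Rb) * \<beta> ^ n)" for n
  proof (cases "n < T")
    case True
    have "condE P [s0] n (\<lambda>x. Rf (spl T a) x - Rf a x) = condE P [s0] n (\<lambda>x. 0)"
    proof (rule condE_cong)
      fix es :: "'s list" assume "length es = n"
      then have "length ([s0] @ es) \<le> cutp T ([s0] @ es)" using True by (simp add: cutp_def)
      then show "Rf (spl T a) ([s0] @ es) - Rf a ([s0] @ es) = 0"
        unfolding Rf_def using spl_int_agree[of "[s0] @ es" T "\<lambda>x a s. r x a s + (\<Sum>i<I. \<gamma> i * g i x a s)" a] by simp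
    qed
    then show ?thesis using True by (simp add: condE_def)
  next
    case False
    have "\<bar>condE P [s0] n (\<lambda>x. Rf (spl T a) x - Rf a x)\<bar> \<le> 2 * Rb"
    proof (rule condE_abs_le[OF P_pos P_sum])
      fix es :: "'s list" assume "length es = n"
      show "\<bar>Rf (spl T a) ([s0] @ es) - Rf a ([s0] @ es)\<bar> \<le> 2 * Rb"
        using Rf_bd[OF a', of "[s0] @ es"] Rf_bd[OF a, of "[s0] @ es"] by simp
    qed
    then show ?thesis using False \<beta>0 by (simp add: abs_mult mult.commute mult_left_mono)
  qed
  from geom_tail_bound(2)[OF \<beta>0 \<beta>1 this] show ?thesis unfolding eq by simp
qed

lemma gen_spl_agree:
  assumes "ss \<noteq> []" "length ss \<le> Suc (cutp T ss)"
  shows "gen (spl T a) ss = gen a ss"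
  unfolding gen_def using assms cutp_take[OF assms(1), of T]
  by (auto intro!: map_cong spl_agree_a)

end

lemma linf_add: "y \<in> linf J \<Longrightarrow> z \<in> linf J \<Longrightarrow> (\<lambda>j. y j + z j) \<in> linf J"
proof -
  assume y: "y \<in> linf J" and z: "z \<in> linf J"
  then obtain B1 B2 where "\<forall>j\<in>J. \<bar>y j\<bar> \<le> B1" "\<forall>j\<in>J. \<bar>z j\<bar> \<le> B2" unfolding linf_def by blast
  then have "\<forall>j\<in>J. \<bar>y j + z j\<bar> \<le> B1 + B2" by (meson abs_triangle_ineq add_mono order_trans)
  then show ?thesis using y z unfolding linf_def by auto
qed

lemma linf_scale: "y \<in> linf J \<Longrightarrow> (\<lambda>j. c * y j) \<in> linf J"
proof -
  assume y: "y \<in> linf J"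
  then obtain B where B: "\<forall>j\<in>J. \<bar>y j\<bar> \<le> B" unfolding linf_def by blast
  have "\<forall>j\<in>J. \<bar>c * y j\<bar> \<le> \<bar>c\<bar> * B" using B by (simp add: abs_mult mult_left_mono)
  then show ?thesis using y unfolding linf_def by auto
qed

lemma linf_diff: "y \<in> linf J \<Longrightarrow> z \<in> linf J \<Longrightarrow> (\<lambda>j. y j - z j) \<in> linf J"
  using linf_add[of y J "\<lambda>j. (-1) * z j"] linf_scale[of z J "-1"] by simp

lemma linf_zero: "(\<lambda>j. 0) \<in> linf J" unfolding linf_def by auto

lemma linf_sum: "finite F \<Longrightarrow> (\<forall>k\<in>F. y k \<in> linf J) \<Longrightarrow> (\<lambda>j. \<Sum>k\<in>F. y k j) \<in> linf J"
proof (induction F rule: finite_induct)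
  case empty then show ?case using linf_zero by simp
next
  case (insert k F)
  then have "(\<lambda>j. y k j + (\<Sum>k\<in>F. y k j)) \<in> linf J" by (intro linf_add) auto
  then show ?case using insert by simp
qed

lemma linf_restrict: "y \<in> linf J \<Longrightarrow> (\<lambda>j. if j \<in> S then y j else 0) \<in> linf J"
proof -
  assume y: "y \<in> linf J"
  then obtain B where B: "\<forall>j\<in>J. \<bar>y j\<bar> \<le> B" unfolding linf_def by blast
  have b: "\<forall>j\<in>J. \<bar>if j \<in> S then y j else 0\<bar> \<le> max B 0" using B by auto
  have z: "\<forall>j. j \<notin> J \<longrightarrow> (if j \<in> S then y j else 0) = 0" using y by (auto simp: linf_def)
  show ?thesis unfolding linf_def mem_Collect_eq using b z by blast
qed

lemma linf_ind: "S \<subseteq> J \<Longrightarrow> (\<lambda>j. if j \<in> S then 1 else 0) \<in> linf J"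
proof -
  assume "S \<subseteq> J"
  then have z: "\<forall>j. j \<notin> J \<longrightarrow> (if j \<in> S then (1::real) else 0) = 0" by auto
  have b: "\<forall>j\<in>J. \<bar>if j \<in> S then (1::real) else 0\<bar> \<le> 1" by simp
  show ?thesis unfolding linf_def mem_Collect_eq using b z by blast
qed

lemma pd_add: "\<phi> \<in> posdual J \<Longrightarrow> y \<in> linf J \<Longrightarrow> z \<in> linf J \<Longrightarrow> \<phi> (\<lambda>j. y j + z j) = \<phi> y + \<phi> z"
  unfolding posdual_def by auto

lemma pd_scale: "\<phi> \<in> posdual J \<Longrightarrow> y \<in> linf J \<Longrightarrow> \<phi> (\<lambda>j. c * y j) = c * \<phi> y"
  unfolding posdual_def by auto

lemma pd_pos: "\<phi> \<in> posdual J \<Longrightarrow> y \<in> linf J \<Longrightarrow> (\<forall>j\<in>J. y j \<ge> 0) \<Longrightarrow> \<phi> y \<ge> 0"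
  unfolding posdual_def by auto

lemma pd_zero: "\<phi> \<in> posdual J \<Longrightarrow> \<phi> (\<lambda>j. 0) = 0"
  using pd_scale[of \<phi> J "\<lambda>j. 0" 0] linf_zero[of J] by simp

lemma pd_sum: assumes ph: "\<phi> \<in> posdual J" shows "finite F \<Longrightarrow> (\<forall>k\<in>F. y k \<in> linf J) \<Longrightarrow> \<phi> (\<lambda>j. \<Sum>k\<in>F. y k j) = (\<Sum>k\<in>F. \<phi> (y k))"
proof (induction F rule: finite_induct)
  case empty then show ?case using pd_zero[OF ph] by simp
next
  case (insert k F)
  have "\<phi> (\<lambda>j. \<Sum>k\<in>insert k F. y k j) = \<phi> (\<lambda>j. y k j + (\<Sum>k\<in>F. y k j))" using insert by simp
  also have "\<dots> = \<phi> (\<lambda>j. y k j) + \<phi> (\<lambda>j. \<Sum>k\<in>F. y k j)"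
    by (rule pd_add[OF ph]) (use insert linf_sum in auto)
  finally show ?case using insert by simp
qed

lemma pd_mono: "\<phi> \<in> posdual J \<Longrightarrow> y \<in> linf J \<Longrightarrow> z \<in> linf J \<Longrightarrow> (\<forall>j\<in>J. y j \<le> z j) \<Longrightarrow> \<phi> y \<le> \<phi> z"
proof -
  assume ph: "\<phi> \<in> posdual J" and y: "y \<in> linf J" and z: "z \<in> linf J" and le: "\<forall>j\<in>J. y j \<le> z j"
  have "\<phi> z = \<phi> (\<lambda>j. y j + (z j - y j))" by simp
  also have "\<dots> = \<phi> y + \<phi> (\<lambda>j. z j - y j)" by (rule pd_add[OF ph y linf_diff[OF z y]])
  finally show ?thesis using pd_pos[OF ph linf_diff[OF z y]] le by simp
qed

definition "ej j = (\<lambda>j'. if j' = j then (1::real) else 0)"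

lemma ej_linf: "j \<in> J \<Longrightarrow> ej j \<in> linf J"
proof -
  assume "j \<in> J"
  then have "(\<lambda>j'. if j' \<in> {j} then (1::real) else 0) \<in> linf J" by (intro linf_ind) auto
  moreover have "(\<lambda>j'. if j' \<in> {j} then (1::real) else 0) = ej j" unfolding ej_def by auto
  ultimately show ?thesis by simp
qed

lemma pd_restrict:
  assumes ph: "\<phi> \<in> posdual J" and F: "finite F" "F \<subseteq> J"
  shows "\<phi> (\<lambda>j. if j \<in> F then y j else 0) = (\<Sum>j\<in>F. y j * \<phi> (ej j))"
proof -
  have eqf: "(\<lambda>j. if j \<in> F then y j else 0) = (\<lambda>j'. \<Sum>j\<in>F. y j * ej j j')"
  proof
    fix j'
    have "y j * ej j j' = (if j' = j then y j else 0)" for j by (simp add: ej_def)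
    then have "(\<Sum>j\<in>F. y j * ej j j') = (\<Sum>j\<in>F. if j' = j then y j else 0)" by presburger
    also have "\<dots> = (if j' \<in> F then y j' else 0)" by (rule sum.delta'[OF F(1)])
    finally show "(if j' \<in> F then y j' else 0) = (\<Sum>j\<in>F. y j * ej j j')" by argo
  qed
  have lin: "\<forall>k\<in>F. (\<lambda>j'. y k * ej k j') \<in> linf J"
  proof
    fix k assume "k \<in> F"
    then have "k \<in> J" using F by auto
    from linf_scale[OF ej_linf[OF this]] show "(\<lambda>j'. y k * ej k j') \<in> linf J" .
  qed
  have "\<phi> (\<lambda>j'. \<Sum>j\<in>F. y j * ej j j') = (\<Sum>j\<in>F. \<phi> (\<lambda>j'. y j * ej j j'))"
    by (rule pd_sum[OF ph F(1) lin])
  also have "\<dots> = (\<Sum>j\<in>F. y j * \<phi> (ej j))"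
  proof (rule sum.cong[OF refl])
    fix j assume "j \<in> F"
    then have "j \<in> J" using F by auto
    from pd_scale[OF ph ej_linf[OF this]] show "\<phi> (\<lambda>j'. y j * ej j j') = y j * \<phi> (ej j)" .
  qed
  finally show ?thesis unfolding eqf .
qed

lemma pd_ej_nonneg: "\<phi> \<in> posdual J \<Longrightarrow> j \<in> J \<Longrightarrow> \<phi> (ej j) \<ge> 0"
  using pd_pos[of \<phi> J "ej j"] ej_linf[of j J] unfolding ej_def by auto

context dsetup begin

abbreviation "HS t \<equiv> (Hset A t :: (('s list \<times> 'a list) set))"
abbreviation "JJ \<equiv> (Jset A I :: (('s list \<times> 'a list) \<times> nat) set)"

lemma finite_Hset: "finite (HS t)"
proof -
  have "HS t \<subseteq> {ss. length ss = Suc t} \<times> {as. set as \<subseteq> A \<and> length as = t}"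
    unfolding Hset_def by auto
  moreover have "finite ({ss::'s list. length ss = Suc t} \<times> {as. set as \<subseteq> A \<and> length as = t})"
    using finite_len finite_lists_length_eq[OF A_fin] by blast
  ultimately show ?thesis by (rule finite_subset)
qed

lemma pit_nonneg: "pit P s0 ss \<ge> 0"
  unfolding pit_def using pprob_nonneg[OF P_pos] by simp

lemma Hset_J: "h \<in> HS t \<Longrightarrow> i < I \<Longrightarrow> (h, i) \<in> JJ"
  unfolding Jset_def by auto

lemma gen_Hset: "a \<in> Ainf A p \<zeta> x0 \<Longrightarrow> length ss = Suc t \<Longrightarrow> gen a ss \<in> HS t"
proof -
  assume a: "a \<in> Ainf A p \<zeta> x0" and l: "length ss = Suc t"
  have "set (map (\<lambda>k. a (take (Suc k) ss)) [0..<length ss - 1]) \<subseteq> A"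
  proof
    fix x assume "x \<in> set (map (\<lambda>k. a (take (Suc k) ss)) [0..<length ss - 1])"
    then obtain k where "x = a (take (Suc k) ss)" by auto
    moreover have "take (Suc k) ss \<noteq> []" using l by (cases ss) auto
    ultimately show "x \<in> A" using Ainf_A[OF a] by simp
  qed
  then show ?thesis unfolding gen_def Hset_def using l by simp
qed

lemma fst_gen[simp]: "fst (gen a ss) = ss" unfolding gen_def by simp

lemma reindex:
  assumes a: "a \<in> Ainf A p \<zeta> x0"
  shows "(\<Sum>h\<in>HS t. if gen a (fst h) = h then F h else 0) = (\<Sum>ss\<in>{ss. length ss = Suc t}. F (gen a ss))"
proof -
  have "(\<Sum>h\<in>HS t. if gen a (fst h) = h then F h else 0) = (\<Sum>h\<in>{h\<in>HS t. gen a (fst h) = h}. F h)"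
    by (rule sum.inter_filter[symmetric, OF finite_Hset])
  also have "{h\<in>HS t. gen a (fst h) = h} = gen a ` {ss. length ss = Suc t}"
  proof
    show "{h \<in> HS t. gen a (fst h) = h} \<subseteq> gen a ` {ss. length ss = Suc t}"
    proof
      fix h assume h: "h \<in> {h \<in> HS t. gen a (fst h) = h}"
      then have "length (fst h) = Suc t" unfolding Hset_def by auto
      then show "h \<in> gen a ` {ss. length ss = Suc t}" using h by (metis (mono_tags, lifting) image_eqI mem_Collect_eq)
    qed
    show "gen a ` {ss. length ss = Suc t} \<subseteq> {h \<in> HS t. gen a (fst h) = h}"
      using gen_Hset[OF a] by auto
  qed
  also have "(\<Sum>h\<in>gen a ` {ss. length ss = Suc t}. F h) = (\<Sum>ss\<in>{ss. length ss = Suc t}. F (gen a ss))"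
    by (rule sum.reindex_cong[where l="gen a"]) (auto simp: inj_on_def dest: arg_cong[where f=fst])
  finally show ?thesis .
qed

lemma condE_pit: "condE P [s0] t \<psi> = (\<Sum>ss\<in>{ss. length ss = Suc t}. pit P s0 ss * \<psi> ss)"
proof -
  have fin: "finite (UNIV::'s set)" by simp
  have "(\<Sum>ss\<in>{ss. length ss = Suc t}. pit P s0 ss * \<psi> ss)
     = (\<Sum>e\<in>UNIV. \<Sum>es\<in>{es. length es = t}. pit P s0 (e # es) * \<psi> (e # es))"
    by (rule sum_len_Suc)
  also have "\<dots> = (\<Sum>e\<in>UNIV. if e = s0 then (\<Sum>es\<in>{es. length es = t}. pprob P s0 es * \<psi> (s0 # es)) else 0)"
    unfolding pit_def by (intro sum.cong refl) simp
  also have "\<dots> = (\<Sum>es\<in>{es. length es = t}. pprob P s0 es * \<psi> (s0 # es))"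
    using sum.delta[OF fin, of s0 "\<lambda>_. \<Sum>es\<in>{es. length es = t}. pprob P s0 es * \<psi> (s0 # es)"] by simp
  finally show ?thesis unfolding condE_def by simp
qed

definition "Lint a lam ss = (\<Sum>i<I. lam (gen a ss) i * (cont \<zeta> P \<beta> (g i) a x0 ss - gbar i))"

lemma Lagr_eq: "Lagr \<zeta> P \<beta> r g gbar I \<gamma> x0 s0 a lam
   = (\<Sum>t. \<beta> ^ t * condE P [s0] t (Rf a) + \<beta> ^ t * condE P [s0] t (Lint a lam))"
proof -
  have "\<beta> ^ t * condE P [s0] t (Rf a) + \<beta> ^ t * condE P [s0] t (Lint a lam)
     = \<beta> ^ t * condE P [s0] t (\<lambda>ss. Rf a ss + Lint a lam ss)" for t
    by (simp only: condE_add distrib_left[symmetric])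
  then show ?thesis unfolding Lagr_def Rf_def Lint_def by simp
qed

definition "Phit lam t y = (\<Sum>h\<in>HS t. \<Sum>i<I. \<beta> ^ t * lam h i * pit P s0 (fst h) * y (h, i))"
definition "Mt lam t = (\<Sum>h\<in>HS t. \<Sum>i<I. \<beta> ^ t * lam h i * pit P s0 (fst h))"
definition "phi_of lam y = (\<Sum>t. Phit lam t y)"

lemma Mt_nonneg: "lam \<in> LamSet A I P \<beta> s0 \<Longrightarrow> Mt lam t \<ge> 0"
  unfolding Mt_def LamSet_def using \<beta>0 pit_nonneg by (auto intro!: sum_nonneg mult_nonneg_nonneg)

lemma Mt_summable: "lam \<in> LamSet A I P \<beta> s0 \<Longrightarrow> summable (Mt lam)"
  unfolding Mt_def LamSet_def by simp

lemma Phit_bd: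
  assumes lam: "lam \<in> LamSet A I P \<beta> s0" and B: "\<forall>j\<in>JJ. \<bar>y j\<bar> \<le> B"
  shows "\<bar>Phit lam t y\<bar> \<le> B * Mt lam t"
proof -
  have "\<bar>Phit lam t y\<bar> \<le> (\<Sum>h\<in>HS t. \<bar>\<Sum>i<I. \<beta> ^ t * lam h i * pit P s0 (fst h) * y (h, i)\<bar>)"
    unfolding Phit_def by (rule sum_abs)
  also have "\<dots> \<le> (\<Sum>h\<in>HS t. \<Sum>i<I. B * (\<beta> ^ t * lam h i * pit P s0 (fst h)))"
  proof (rule sum_mono)
    fix h assume h: "h \<in> HS t"
    have "\<bar>\<Sum>i<I. \<beta> ^ t * lam h i * pit P s0 (fst h) * y (h, i)\<bar> \<le> (\<Sum>i<I. \<bar>\<beta> ^ t * lam h i * pit P s0 (fst h) * y (h, i)\<bar>)"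
      by (rule sum_abs)
    also have "\<dots> \<le> (\<Sum>i<I. B * (\<beta> ^ t * lam h i * pit P s0 (fst h)))"
    proof (rule sum_mono)
      fix i assume i: "i \<in> {..<I}"
      have c: "\<beta> ^ t * lam h i * pit P s0 (fst h) \<ge> 0"
        using lam h i \<beta>0 pit_nonneg unfolding LamSet_def by (auto intro!: mult_nonneg_nonneg)
      have "\<bar>y (h, i)\<bar> \<le> B" using B Hset_J[OF h] i by auto
      then show "\<bar>\<beta> ^ t * lam h i * pit P s0 (fst h) * y (h, i)\<bar> \<le> B * (\<beta> ^ t * lam h i * pit P s0 (fst h))"
      proof -
        have "\<bar>\<beta> ^ t * lam h i * pit P s0 (fst h) * y (h, i)\<bar> = (\<beta> ^ t * lam h i * pit P s0 (fst h)) * \<bar>y (h, i)\<bar>"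
          by (simp only: abs_mult[of "\<beta> ^ t * lam h i * pit P s0 (fst h)" "y (h, i)"] abs_of_nonneg[OF c])
        also have "\<dots> \<le> (\<beta> ^ t * lam h i * pit P s0 (fst h)) * B" using c \<open>\<bar>y (h, i)\<bar> \<le> B\<close> by (rule mult_left_mono[rotated])
        finally show ?thesis by (simp only: mult.commute)
      qed
    qed
    finally show "\<bar>\<Sum>i<I. \<beta> ^ t * lam h i * pit P s0 (fst h) * y (h, i)\<bar> \<le> (\<Sum>i<I. B * (\<beta> ^ t * lam h i * pit P s0 (fst h)))" .
  qed
  also have "\<dots> = B * Mt lam t" unfolding Mt_def by (simp add: sum_distrib_left)
  finally show ?thesis .
qed

lemma Phit_summable:
  assumes lam: "lam \<in> LamSet A I P \<beta> s0" and y: "y \<in> linf (JJ)"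
  shows "summable (\<lambda>t. Phit lam t y)" "summable (\<lambda>t. \<bar>Phit lam t y\<bar>)"
proof -
  obtain B where B: "\<forall>j\<in>JJ. \<bar>y j\<bar> \<le> B" using y unfolding linf_def by blast
  have s: "summable (\<lambda>t. B * Mt lam t)" by (rule summable_mult[OF Mt_summable[OF lam]])
  show "summable (\<lambda>t. Phit lam t y)"
    by (rule summable_comparison_test[OF _ s]) (use Phit_bd[OF lam B] in auto)
  show "summable (\<lambda>t. \<bar>Phit lam t y\<bar>)"
    by (rule summable_comparison_test[OF _ s]) (use Phit_bd[OF lam B] in auto)
qed

lemma phi_of_posdual:
  assumes lam: "lam \<in> LamSet A I P \<beta> s0"
  shows "phi_of lam \<in> posdual (JJ)"
  unfolding posdual_def
proof (intro CollectI conjI ballI allI impI)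
  fix y z assume y: "y \<in> linf (JJ)" and z: "z \<in> linf (JJ)"
  have "Phit lam t (\<lambda>j. y j + z j) = Phit lam t y + Phit lam t z" for t
    unfolding Phit_def by (simp add: distrib_left sum.distrib)
  then show "phi_of lam (\<lambda>j. y j + z j) = phi_of lam y + phi_of lam z"
    unfolding phi_of_def using suminf_add[OF Phit_summable(1)[OF lam y] Phit_summable(1)[OF lam z]] by simp
next
  fix c y assume y: "y \<in> linf (JJ)"
  have "Phit lam t (\<lambda>j. c * y j) = c * Phit lam t y" for t
    unfolding Phit_def by (simp add: sum_distrib_left mult_ac)
  then show "phi_of lam (\<lambda>j. c * y j) = c * phi_of lam y"
    unfolding phi_of_def using suminf_mult[OF Phit_summable(1)[OF lam y], of c] by simp
next
  show "\<exists>K. \<forall>y\<in>linf (JJ). \<forall>B. (\<forall>j\<in>JJ. \<bar>y j\<bar> \<le> B) \<longrightarrow> \<bar>phi_of lam y\<bar> \<le> K * B"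
  proof (intro exI ballI allI impI)
    fix y B assume y: "y \<in> linf (JJ)" and B: "\<forall>j\<in>JJ. \<bar>y j\<bar> \<le> B"
    have "\<bar>phi_of lam y\<bar> \<le> (\<Sum>t. \<bar>Phit lam t y\<bar>)"
      unfolding phi_of_def using summable_norm[of "\<lambda>t. Phit lam t y"] Phit_summable(2)[OF lam y] by simp
    also have "\<dots> \<le> (\<Sum>t. B * Mt lam t)"
      by (rule suminf_le[OF _ Phit_summable(2)[OF lam y] summable_mult[OF Mt_summable[OF lam]]])
        (use Phit_bd[OF lam B] in auto)
    also have "\<dots> = suminf (Mt lam) * B" using suminf_mult[OF Mt_summable[OF lam], of B] by simp
    finally show "\<bar>phi_of lam y\<bar> \<le> suminf (Mt lam) * B" .
  qed
next
  fix y assume y: "y \<in> linf (JJ)" and nn: "\<forall>j\<in>JJ. 0 \<le> y j"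
  have "Phit lam t y \<ge> 0" for t
    unfolding Phit_def using lam nn Hset_J \<beta>0 pit_nonneg unfolding LamSet_def
    by (auto intro!: sum_nonneg mult_nonneg_nonneg)
  then show "0 \<le> phi_of lam y" unfolding phi_of_def
    by (intro suminf_nonneg Phit_summable(1)[OF lam y])
qed

lemma cont_J: "(h, i) \<in> JJ \<Longrightarrow> gvec A \<zeta> P \<beta> g gbar I x0 a (h, i)
   = (if gen a (fst h) = h then 1 else 0) * (cont \<zeta> P \<beta> (g i) a x0 (fst h) - gbar i)"
  unfolding gvec_def by simp

lemma Phit_gvec:
  assumes a: "a \<in> Ainf A p \<zeta> x0"
  shows "Phit lam t (gvec A \<zeta> P \<beta> g gbar I x0 a) = \<beta> ^ t * condE P [s0] t (Lint a lam)"
proof -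
  have "Phit lam t (gvec A \<zeta> P \<beta> g gbar I x0 a)
     = (\<Sum>h\<in>HS t. if gen a (fst h) = h then
          (\<Sum>i<I. \<beta> ^ t * lam h i * pit P s0 (fst h) * (cont \<zeta> P \<beta> (g i) a x0 (fst h) - gbar i)) else 0)"
    unfolding Phit_def by (intro sum.cong refl) (auto simp: cont_J Hset_J)
  also have "\<dots> = (\<Sum>ss\<in>{ss. length ss = Suc t}.
          (\<Sum>i<I. \<beta> ^ t * lam (gen a ss) i * pit P s0 ss * (cont \<zeta> P \<beta> (g i) a x0 ss - gbar i)))"
    using reindex[OF a, where t=t and F="\<lambda>h::'s list \<times> 'a list. \<Sum>i<I. \<beta> ^ t * lam h i * pit P s0 (fst h) * (cont \<zeta> P \<beta> (g i) a x0 (fst h) - gbar i)"]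
    by simp
  also have "\<dots> = \<beta> ^ t * condE P [s0] t (Lint a lam)"
    unfolding condE_pit Lint_def by (simp add: sum_distrib_left mult_ac)
  finally show ?thesis .
qed

lemma Lagr_phi:
  assumes a: "a \<in> Ainf A p \<zeta> x0" and lam: "lam \<in> LamSet A I P \<beta> s0"
  shows "Lagr \<zeta> P \<beta> r g gbar I \<gamma> x0 s0 a lam = fobj \<zeta> P \<beta> r g I \<gamma> x0 s0 a + phi_of lam (gvec A \<zeta> P \<beta> g gbar I x0 a)"
proof -
  have gl: "gvec A \<zeta> P \<beta> g gbar I x0 a \<in> linf (JJ)"
  proof -
    have "\<forall>j\<in>JJ. \<bar>gvec A \<zeta> P \<beta> g gbar I x0 a j\<bar> \<le> Cg"
    proof
      fix j assume j: "j \<in> JJ"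
      obtain h i where hi: "j = (h, i)" by (cases j)
      have i: "i < I" and ne: "fst h \<noteq> []" using j hi unfolding Jset_def Hset_def by auto
      show "\<bar>gvec A \<zeta> P \<beta> g gbar I x0 a j\<bar> \<le> Cg"
        using contg_bd[OF a ne i] Cg_nonneg j unfolding hi cont_J[OF j[unfolded hi]] by auto
    qed
    moreover have "\<forall>j. j \<notin> JJ \<longrightarrow> gvec A \<zeta> P \<beta> g gbar I x0 a j = 0"
      unfolding gvec_def by auto
    ultimately show ?thesis unfolding linf_def by blast
  qed
  show ?thesis
    unfolding Lagr_eq fobj_eq phi_of_def Phit_gvec[OF a]
    by (rule suminf_add[symmetric, OF Rf_summable[OF a]])
      (use Phit_summable(1)[OF lam gl] Phit_gvec[OF a] in simp)
qed

end

lemma conv_tendsto: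
  fixes M :: "nat \<Rightarrow> real"
  assumes M: "\<And>t. M t \<ge> 0" "summable M" and b: "0 < \<beta>" "\<beta> < 1"
  shows "(\<lambda>T. \<Sum>t<T. M t * \<beta> ^ (T - t)) \<longlonglongrightarrow> 0"
proof -
  have sM: "summable (\<lambda>k. norm (M k))" using M by simp
  have sb: "summable (\<lambda>k. norm (\<beta> ^ k))" using b by (simp add: summable_geometric)
  define c where "c k = (\<Sum>i\<le>k. M i * \<beta> ^ (k - i))" for k
  have "c sums ((\<Sum>k. M k) * (\<Sum>k. \<beta> ^ k))" unfolding c_def by (rule Cauchy_product_sums[OF sM sb])
  then have "c \<longlonglongrightarrow> 0" using summable_LIMSEQ_zero sums_summable by blast
  then have "(\<lambda>k. \<beta> * c k) \<longlonglongrightarrow> 0" by (rule tendsto_mult_right_zero)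
  moreover have "(\<Sum>t<Suc k. M t * \<beta> ^ (Suc k - t)) = \<beta> * c k" for k
  proof -
    have "(\<Sum>t<Suc k. M t * \<beta> ^ (Suc k - t)) = (\<Sum>t\<le>k. \<beta> * (M t * \<beta> ^ (k - t)))"
      unfolding lessThan_Suc_atMost by (intro sum.cong refl) (simp add: Suc_diff_le)
    then show ?thesis unfolding c_def by (simp add: sum_distrib_left)
  qed
  ultimately have "(\<lambda>k. \<Sum>t<Suc k. M t * \<beta> ^ (Suc k - t)) \<longlonglongrightarrow> 0" by simp
  then show ?thesis by (rule LIMSEQ_imp_Suc)
qed

lemma tail_tendsto:
  fixes M :: "nat \<Rightarrow> real"
  assumes "summable M"
  shows "(\<lambda>T. \<Sum>n. M (n + T)) \<longlonglongrightarrow> 0"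
proof -
  have "(\<lambda>T. suminf M - (\<Sum>t<T. M t)) \<longlonglongrightarrow> suminf M - suminf M"
    by (intro tendsto_diff tendsto_const summable_LIMSEQ[OF assms])
  moreover have "(\<Sum>n. M (n + T)) = suminf M - (\<Sum>t<T. M t)" for T
    using suminf_split_initial_segment[OF assms, of T] by simp
  ultimately show ?thesis by simp
qed

context dsetup begin

lemma pit_pos: "ss \<noteq> [] \<Longrightarrow> hd ss = s0 \<Longrightarrow> pit P s0 ss > 0"
proof -
  have "pprob P s es > 0" for s es
    by (induction es arbitrary: s) (use P_pos in auto)
  then show "ss \<noteq> [] \<Longrightarrow> hd ss = s0 \<Longrightarrow> pit P s0 ss > 0" unfolding pit_def by simp
qed

lemma pit_zero: "hd ss \<noteq> s0 \<Longrightarrow> pit P s0 ss = 0"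
  unfolding pit_def by auto

lemma Phit_bd':
  assumes lam: "lam \<in> LamSet A I P \<beta> s0"
    and B: "\<And>h i. h \<in> HS t \<Longrightarrow> i < I \<Longrightarrow> hd (fst h) = s0 \<Longrightarrow> \<bar>y (h, i)\<bar> \<le> B"
  shows "\<bar>Phit lam t y\<bar> \<le> B * Mt lam t"
proof -
  have "\<bar>Phit lam t y\<bar> \<le> (\<Sum>h\<in>HS t. \<bar>\<Sum>i<I. \<beta> ^ t * lam h i * pit P s0 (fst h) * y (h, i)\<bar>)"
    unfolding Phit_def by (rule sum_abs)
  also have "\<dots> \<le> (\<Sum>h\<in>HS t. \<Sum>i<I. B * (\<beta> ^ t * lam h i * pit P s0 (fst h)))"
  proof (rule sum_mono)
    fix h assume h: "h \<in> HS t"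
    have "\<bar>\<Sum>i<I. \<beta> ^ t * lam h i * pit P s0 (fst h) * y (h, i)\<bar> \<le> (\<Sum>i<I. \<bar>\<beta> ^ t * lam h i * pit P s0 (fst h) * y (h, i)\<bar>)"
      by (rule sum_abs)
    also have "\<dots> \<le> (\<Sum>i<I. B * (\<beta> ^ t * lam h i * pit P s0 (fst h)))"
    proof (rule sum_mono)
      fix i assume i: "i \<in> {..<I}"
      have c: "\<beta> ^ t * lam h i * pit P s0 (fst h) \<ge> 0"
        using lam h i \<beta>0 pit_nonneg unfolding LamSet_def by (auto intro!: mult_nonneg_nonneg)
      show "\<bar>\<beta> ^ t * lam h i * pit P s0 (fst h) * y (h, i)\<bar> \<le> B * (\<beta> ^ t * lam h i * pit P s0 (fst h))"
      proof (cases "hd (fst h) = s0")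
        case True
        have yb: "\<bar>y (h, i)\<bar> \<le> B" using B[OF h _ True] i by auto
        have "\<bar>\<beta> ^ t * lam h i * pit P s0 (fst h) * y (h, i)\<bar> = (\<beta> ^ t * lam h i * pit P s0 (fst h)) * \<bar>y (h, i)\<bar>"
          by (simp only: abs_mult[of "\<beta> ^ t * lam h i * pit P s0 (fst h)" "y (h, i)"] abs_of_nonneg[OF c])
        also have "\<dots> \<le> (\<beta> ^ t * lam h i * pit P s0 (fst h)) * B" using c yb by (rule mult_left_mono[rotated])
        finally show ?thesis by (simp only: mult.commute)
      next
        case False
        then show ?thesis using pit_zero by simp
      qed
    qed
    finally show "\<bar>\<Sum>i<I. \<beta> ^ t * lam h i * pit P s0 (fst h) * y (h, i)\<bar> \<le> (\<Sum>i<I. B * (\<beta> ^ t * lam h i * pit P s0 (fst h)))" .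
  qed
  also have "\<dots> = B * Mt lam t" unfolding Mt_def by (simp add: sum_distrib_left)
  finally show ?thesis .
qed

lemma Phit_diff: "Phit lam t y - Phit lam t z = Phit lam t (\<lambda>j. y j - z j)"
  unfolding Phit_def by (simp add: sum_subtractf right_diff_distrib)

lemma gvec_linf: "a \<in> Ainf A p \<zeta> x0 \<Longrightarrow> gvec A \<zeta> P \<beta> g gbar I x0 a \<in> linf JJ"
  and gvec_bd: "a \<in> Ainf A p \<zeta> x0 \<Longrightarrow> \<forall>j\<in>JJ. \<bar>gvec A \<zeta> P \<beta> g gbar I x0 a j\<bar> \<le> Cg"
proof -
  assume a: "a \<in> Ainf A p \<zeta> x0"
  show b: "\<forall>j\<in>JJ. \<bar>gvec A \<zeta> P \<beta> g gbar I x0 a j\<bar> \<le> Cg"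
  proof
    fix j assume j: "j \<in> JJ"
    obtain h i where hi: "j = (h, i)" by (cases j)
    have i: "i < I" and ne: "fst h \<noteq> []" using j hi unfolding Jset_def Hset_def by auto
    show "\<bar>gvec A \<zeta> P \<beta> g gbar I x0 a j\<bar> \<le> Cg"
      using contg_bd[OF a ne i] Cg_nonneg j unfolding hi cont_J[OF j[unfolded hi]] by auto
  qed
  moreover have "\<forall>j. j \<notin> JJ \<longrightarrow> gvec A \<zeta> P \<beta> g gbar I x0 a j = 0"
    unfolding gvec_def by auto
  ultimately show "gvec A \<zeta> P \<beta> g gbar I x0 a \<in> linf JJ" unfolding linf_def by blast
qed

end

context dsetup begin

definition "lamF \<phi> h i = \<phi> (ej (h, i)) / (\<beta> ^ (length (fst h) - 1) * pit P s0 (fst h))"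
definition "Ft t = {h \<in> HS t. hd (fst h) = s0} \<times> {..<I}"
definition "UT T = (\<Union>t<T. Ft t)"

lemma coef_lamF:
  assumes h: "h \<in> HS t"
  shows "\<beta> ^ t * lamF \<phi> h i * pit P s0 (fst h) = (if hd (fst h) = s0 then \<phi> (ej (h, i)) else 0)"
proof -
  have l: "length (fst h) = Suc t" using h unfolding Hset_def by auto
  show ?thesis
  proof (cases "hd (fst h) = s0")
    case True
    have "fst h \<noteq> []" using l by auto
    then have "pit P s0 (fst h) > 0" using pit_pos[OF _ True] by blast
    moreover have "\<beta> ^ t > 0" using \<beta>0 by simp
    ultimately show ?thesis using True l \<beta>0 unfolding lamF_def by (simp add: field_simps)
  next
    case False
    then show ?thesis using pit_zero by simp
  qed
qed

lemma finite_Ft: "finite (Ft t)"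
  unfolding Ft_def using finite_Hset by auto

lemma Ft_J: "Ft t \<subseteq> JJ"
  unfolding Ft_def Jset_def by auto

lemma Ft_disj: "t \<noteq> t' \<Longrightarrow> Ft t \<inter> Ft t' = {}"
  unfolding Ft_def Hset_def by auto

lemma finite_UT: "finite (UT T)" unfolding UT_def using finite_Ft by auto
lemma UT_J: "UT T \<subseteq> JJ" unfolding UT_def using Ft_J by auto

lemma sum_UT: "(\<Sum>j\<in>UT T. F j) = (\<Sum>t<T. \<Sum>j\<in>Ft t. F j)"
  unfolding UT_def by (rule sum.UNION_disjoint) (use finite_Ft Ft_disj in auto)

lemma sum_Ft: "(\<Sum>j\<in>Ft t. F j) = (\<Sum>h\<in>HS t. if hd (fst h) = s0 then (\<Sum>i<I. F (h, i)) else 0)"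
proof -
  have "(\<Sum>j\<in>Ft t. F j) = (\<Sum>h\<in>{h \<in> HS t. hd (fst h) = s0}. \<Sum>i<I. F (h, i))"
    unfolding Ft_def by (simp add: sum.cartesian_product)
  also have "\<dots> = (\<Sum>h\<in>HS t. if hd (fst h) = s0 then (\<Sum>i<I. F (h, i)) else 0)"
    by (rule sum.inter_filter[OF finite_Hset])
  finally show ?thesis .
qed

lemma Phit_lamF: "Phit (lamF \<phi>) t y = (\<Sum>j\<in>Ft t. y j * \<phi> (ej j))"
proof -
  have "Phit (lamF \<phi>) t y = (\<Sum>h\<in>HS t. \<Sum>i<I. (if hd (fst h) = s0 then \<phi> (ej (h, i)) else 0) * y (h, i))"
    unfolding Phit_def by (intro sum.cong refl) (simp add: coef_lamF)
  also have "\<dots> = (\<Sum>h\<in>HS t. if hd (fst h) = s0 then (\<Sum>i<I. y (h, i) * \<phi> (ej (h, i))) else 0)"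
    by (intro sum.cong refl) (auto simp: mult.commute)
  also have "\<dots> = (\<Sum>j\<in>Ft t. y j * \<phi> (ej j))"
    by (rule sum_Ft[symmetric])
  finally show ?thesis .
qed

lemma Mt_Phit: "Mt lam t = Phit lam t (\<lambda>_. 1)"
  unfolding Mt_def Phit_def by simp

lemma phi_UT:
  assumes ph: "\<phi> \<in> posdual JJ"
  shows "\<phi> (\<lambda>j. if j \<in> UT T then y j else 0) = (\<Sum>t<T. Phit (lamF \<phi>) t y)"
  unfolding pd_restrict[OF ph finite_UT UT_J] sum_UT Phit_lamF ..

lemma lamF_Lam:
  assumes ph: "\<phi> \<in> posdual JJ"
  shows "lamF \<phi> \<in> LamSet A I P \<beta> s0"
  unfolding LamSet_def
proof (intro CollectI conjI allI ballI impI)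
  fix t h i assume h: "h \<in> HS t" and i: "i < I"
  have "\<phi> (ej (h, i)) \<ge> 0" by (rule pd_ej_nonneg[OF ph Hset_J[OF h i]])
  moreover have "\<beta> ^ (length (fst h) - 1) * pit P s0 (fst h) \<ge> 0" using \<beta>0 pit_nonneg by simp
  ultimately show "0 \<le> lamF \<phi> h i" unfolding lamF_def by simp
next
  have nn: "0 \<le> Mt (lamF \<phi>) t" for t
    unfolding Mt_Phit Phit_lamF
  proof (intro sum_nonneg)
    fix j assume "j \<in> Ft t"
    then have "j \<in> JJ" using Ft_J by blast
    then show "0 \<le> 1 * \<phi> (ej j)" using pd_ej_nonneg[OF ph] by simp
  qed
  have bd: "(\<Sum>t<T. Mt (lamF \<phi>) t) \<le> \<phi> (\<lambda>j. if j \<in> JJ then 1 else 0)" for T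
  proof -
    have "(\<Sum>t<T. Mt (lamF \<phi>) t) = \<phi> (\<lambda>j. if j \<in> UT T then 1 else 0)"
      unfolding Mt_Phit phi_UT[OF ph] ..
    also have "\<dots> \<le> \<phi> (\<lambda>j. if j \<in> JJ then 1 else 0)"
      by (rule pd_mono[OF ph linf_ind[OF UT_J] linf_ind[OF order_refl]]) auto
    finally show ?thesis .
  qed
  have "summable (Mt (lamF \<phi>))" by (rule summableI_nonneg_bounded[OF nn bd])
  then show "summable (\<lambda>t. \<Sum>h\<in>HS t. \<Sum>i<I. \<beta> ^ t * lamF \<phi> h i * pit P s0 (fst h))"
    unfolding Mt_def .
qed

end

context dsetup begin

definition "errT \<phi> T = 2 * Rb * \<beta> ^ T / (1 - \<beta>)
   + 2 * G0 / (1 - \<beta>) * (\<Sum>t<T. Mt (lamF \<phi>) t * \<beta> ^ (T - t))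
   + Cg * (\<Sum>n. Mt (lamF \<phi>) (n + T))"

lemma gvec_spl_nonneg:
  assumes a: "a \<in> Ainf A p \<zeta> x0" and j: "j \<in> JJ" and nj: "j \<notin> UT T"
  shows "gvec A \<zeta> P \<beta> g gbar I x0 (spl T a) j \<ge> 0"
proof -
  obtain h i where hi: "j = (h, i)" by (cases j)
  from j hi obtain t' where h: "h \<in> HS t'" and i: "i < I" unfolding Jset_def by auto
  have l: "length (fst h) = Suc t'" using h unfolding Hset_def by auto
  then have ne: "fst h \<noteq> []" by auto
  have c: "cutp T (fst h) < length (fst h)"
  proof (cases "hd (fst h) = s0")
    case True
    have "\<not> t' < T"
    proof
      assume "t' < T"
      then have "j \<in> Ft t'" unfolding Ft_def hi using h i True by auto
      then show False using nj \<open>t' < T\<close> unfolding UT_def by auto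
    qed
    then show ?thesis using True l unfolding cutp_def by simp
  next
    case False
    then show ?thesis using l unfolding cutp_def by simp
  qed
  have "cont \<zeta> P \<beta> (g i) (spl T a) x0 (fst h) \<ge> gbar i" by (rule spl_cont_after[OF ne c a i])
  then show ?thesis unfolding hi cont_J[OF j[unfolded hi]] by simp
qed

lemma main_est:
  assumes ph: "\<phi> \<in> posdual JJ" and a: "a \<in> Ainf A p \<zeta> x0"
  shows "Lagr \<zeta> P \<beta> r g gbar I \<gamma> x0 s0 a (lamF \<phi>)
     \<le> fobj \<zeta> P \<beta> r g I \<gamma> x0 s0 (spl T a) + \<phi> (gvec A \<zeta> P \<beta> g gbar I x0 (spl T a)) + errT \<phi> T"
proof -
  define a' where "a' = spl T a"
  have a': "a' \<in> Ainf A p \<zeta> x0" unfolding a'_def by (rule spl_Ainf[OF a])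
  define lam where "lam = lamF \<phi>"
  have lam: "lam \<in> LamSet A I P \<beta> s0" unfolding lam_def by (rule lamF_Lam[OF ph])
  define gv where "gv b = gvec A \<zeta> P \<beta> g gbar I x0 b" for b
  define M where "M = Mt lam"
  have gl: "gv a \<in> linf JJ" "gv a' \<in> linf JJ" unfolding gv_def using gvec_linf a a' by auto
  have L: "Lagr \<zeta> P \<beta> r g gbar I \<gamma> x0 s0 a lam = fobj \<zeta> P \<beta> r g I \<gamma> x0 s0 a + (\<Sum>t. Phit lam t (gv a))"
    using Lagr_phi[OF a lam] unfolding phi_of_def gv_def .
  have split: "(\<Sum>t. Phit lam t (gv a)) = (\<Sum>n. Phit lam (n + T) (gv a)) + (\<Sum>t<T. Phit lam t (gv a))"
    by (rule suminf_split_initial_segment[OF Phit_summable(1)[OF lam gl(1)]])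
  have e1: "fobj \<zeta> P \<beta> r g I \<gamma> x0 s0 a \<le> fobj \<zeta> P \<beta> r g I \<gamma> x0 s0 a' + 2 * Rb * \<beta> ^ T / (1 - \<beta>)"
    using fobj_spl_close[OF a, of T] unfolding a'_def by linarith
  have e2t: "Phit lam t (gv a) \<le> Phit lam t (gv a') + 2 * G0 / (1 - \<beta>) * (M t * \<beta> ^ (T - t))" if t: "t < T" for t
  proof -
    have "\<bar>Phit lam t (\<lambda>j. gv a j - gv a' j)\<bar> \<le> (2 * G0 * \<beta> ^ (T - t) / (1 - \<beta>)) * M t"
      unfolding M_def
    proof (rule Phit_bd'[OF lam])
      fix h i assume h: "h \<in> HS t" and i: "i < I" and hd: "hd (fst h) = s0"
      have l: "length (fst h) = Suc t" using h unfolding Hset_def by auto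
      then have ne: "fst h \<noteq> []" by auto
      have cu: "cutp T (fst h) = T" using hd unfolding cutp_def by simp
      have j: "(h, i) \<in> JJ" by (rule Hset_J[OF h i])
      have gen: "gen a' (fst h) = gen a (fst h)" unfolding a'_def
        by (rule gen_spl_agree[OF ne]) (use cu l t in simp)
      have cl: "\<bar>cont \<zeta> P \<beta> (g i) a' x0 (fst h) - cont \<zeta> P \<beta> (g i) a x0 (fst h)\<bar> \<le> 2 * G0 * \<beta> ^ (T - t) / (1 - \<beta>)"
        using cont_spl_close[OF a ne _ i, of T] cu l t unfolding a'_def by simp
      have "gv a (h, i) - gv a' (h, i) = (if gen a (fst h) = h then 1 else 0) * (cont \<zeta> P \<beta> (g i) a x0 (fst h) - cont \<zeta> P \<beta> (g i) a' x0 (fst h))"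
        unfolding gv_def cont_J[OF j] gen by (simp add: algebra_simps)
      then show "\<bar>gv a (h, i) - gv a' (h, i)\<bar> \<le> 2 * G0 * \<beta> ^ (T - t) / (1 - \<beta>)"
        using cl G0_nonneg \<beta>1 by (auto simp: abs_minus_commute)
    qed
    then show ?thesis using Phit_diff[of lam t "gv a" "gv a'"] by (simp add: field_simps)
  qed
  have e2: "(\<Sum>t<T. Phit lam t (gv a)) \<le> (\<Sum>t<T. Phit lam t (gv a')) + 2 * G0 / (1 - \<beta>) * (\<Sum>t<T. M t * \<beta> ^ (T - t))"
  proof -
    have "(\<Sum>t<T. Phit lam t (gv a)) \<le> (\<Sum>t<T. Phit lam t (gv a') + 2 * G0 / (1 - \<beta>) * (M t * \<beta> ^ (T - t)))"
      by (rule sum_mono) (use e2t in auto)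
    then show ?thesis by (simp add: sum.distrib sum_distrib_left)
  qed
  have e3: "(\<Sum>n. Phit lam (n + T) (gv a)) \<le> Cg * (\<Sum>n. M (n + T))"
  proof -
    have b: "\<bar>Phit lam (n + T) (gv a)\<bar> \<le> Cg * M (n + T)" for n
      unfolding M_def by (rule Phit_bd[OF lam]) (use gvec_bd[OF a] gv_def in simp)
    have sM: "summable (\<lambda>n. M (n + T))" unfolding M_def by (rule summable_ignore_initial_segment[OF Mt_summable[OF lam]])
    have sP: "summable (\<lambda>n. Phit lam (n + T) (gv a))"
      by (rule summable_ignore_initial_segment[OF Phit_summable(1)[OF lam gl(1)]])
    have "(\<Sum>n. Phit lam (n + T) (gv a)) \<le> (\<Sum>n. Cg * M (n + T))"
      by (rule suminf_le[OF _ sP summable_mult[OF sM]]) (use b abs_le_D1 in blast)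
    also have "\<dots> = Cg * (\<Sum>n. M (n + T))" by (rule suminf_mult[OF sM])
    finally show ?thesis .
  qed
  have e4: "(\<Sum>t<T. Phit lam t (gv a')) \<le> \<phi> (gv a')"
  proof -
    have "(\<Sum>t<T. Phit lam t (gv a')) = \<phi> (\<lambda>j. if j \<in> UT T then gv a' j else 0)"
      unfolding lam_def by (rule phi_UT[OF ph, symmetric])
    also have "\<dots> \<le> \<phi> (gv a')"
    proof (rule pd_mono[OF ph linf_restrict[OF gl(2)] gl(2)])
      show "\<forall>j\<in>JJ. (if j \<in> UT T then gv a' j else 0) \<le> gv a' j"
        using gvec_spl_nonneg[OF a] unfolding gv_def a'_def by auto
    qed
    finally show ?thesis .
  qed
  show ?thesis
    using L split e1 e2 e3 e4 unfolding errT_def a'_def[symmetric] lam_def[symmetric] M_def gv_def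
    by linarith
qed

lemma errT_tendsto:
  assumes ph: "\<phi> \<in> posdual JJ"
  shows "errT \<phi> \<longlonglongrightarrow> 0"
proof -
  have lam: "lamF \<phi> \<in> LamSet A I P \<beta> s0" by (rule lamF_Lam[OF ph])
  have t1: "(\<lambda>T. 2 * Rb * \<beta> ^ T / (1 - \<beta>)) \<longlonglongrightarrow> 0"
    using \<beta>0 \<beta>1 by (intro tendsto_divide_zero tendsto_mult_right_zero LIMSEQ_power_zero) auto
  have t2: "(\<lambda>T. 2 * G0 / (1 - \<beta>) * (\<Sum>t<T. Mt (lamF \<phi>) t * \<beta> ^ (T - t))) \<longlonglongrightarrow> 0"
    by (intro tendsto_mult_right_zero conv_tendsto Mt_nonneg[OF lam] Mt_summable[OF lam] \<beta>0 \<beta>1)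
  have t3: "(\<lambda>T. Cg * (\<Sum>n. Mt (lamF \<phi>) (n + T))) \<longlonglongrightarrow> 0"
    by (intro tendsto_mult_right_zero tail_tendsto Mt_summable[OF lam])
  have "(\<lambda>T. 2 * Rb * \<beta> ^ T / (1 - \<beta>) + 2 * G0 / (1 - \<beta>) * (\<Sum>t<T. Mt (lamF \<phi>) t * \<beta> ^ (T - t))
      + Cg * (\<Sum>n. Mt (lamF \<phi>) (n + T))) \<longlonglongrightarrow> 0 + 0 + 0"
    by (intro tendsto_add t1 t2 t3)
  then show ?thesis unfolding errT_def[abs_def] by simp
qed

lemma Lagr_le_SUP:
  assumes ph: "\<phi> \<in> posdual JJ" and a: "a \<in> Ainf A p \<zeta> x0"
  shows "ereal (Lagr \<zeta> P \<beta> r g gbar I \<gamma> x0 s0 a (lamF \<phi>))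
     \<le> (SUP b\<in>Ainf A p \<zeta> x0. ereal (fobj \<zeta> P \<beta> r g I \<gamma> x0 s0 b + \<phi> (gvec A \<zeta> P \<beta> g gbar I x0 b)))"
proof (rule ereal_le_epsilon2)
  fix e :: real assume e: "0 < e"
  from errT_tendsto[OF ph] e have "eventually (\<lambda>T. errT \<phi> T < e) sequentially"
    by (rule order_tendstoD)
  then obtain T where T: "errT \<phi> T < e" by (auto simp: eventually_sequentially)
  have sa: "spl T a \<in> Ainf A p \<zeta> x0" by (rule spl_Ainf[OF a])
  have "Lagr \<zeta> P \<beta> r g gbar I \<gamma> x0 s0 a (lamF \<phi>)
     \<le> fobj \<zeta> P \<beta> r g I \<gamma> x0 s0 (spl T a) + \<phi> (gvec A \<zeta> P \<beta> g gbar I x0 (spl T a)) + e"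
    using main_est[OF ph a, of T] T by linarith
  then have "ereal (Lagr \<zeta> P \<beta> r g gbar I \<gamma> x0 s0 a (lamF \<phi>))
     \<le> ereal (fobj \<zeta> P \<beta> r g I \<gamma> x0 s0 (spl T a) + \<phi> (gvec A \<zeta> P \<beta> g gbar I x0 (spl T a))) + ereal e"
    by simp
  also have "\<dots> \<le> (SUP b\<in>Ainf A p \<zeta> x0. ereal (fobj \<zeta> P \<beta> r g I \<gamma> x0 s0 b + \<phi> (gvec A \<zeta> P \<beta> g gbar I x0 b))) + ereal e"
    by (intro add_right_mono SUP_upper sa)
  finally show "ereal (Lagr \<zeta> P \<beta> r g gbar I \<gamma> x0 s0 a (lamF \<phi>))
     \<le> (SUP b\<in>Ainf A p \<zeta> x0. ereal (fobj \<zeta> P \<beta> r g I \<gamma> x0 s0 b + \<phi> (gvec A \<zeta> P \<beta> g gbar I x0 b))) + ereal e" .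
qed

end

theorem theoremC1:
  fixes P :: "'s::finite \<Rightarrow> 's \<Rightarrow> real"
    and A :: "(real^'n) set"
    and X :: "(real^'m) set"
    and \<zeta> :: "real^'m \<Rightarrow> real^'n \<Rightarrow> 's \<Rightarrow> real^'m"
    and p r :: "real^'m \<Rightarrow> real^'n \<Rightarrow> 's \<Rightarrow> real"
    and g :: "nat \<Rightarrow> real^'m \<Rightarrow> real^'n \<Rightarrow> 's \<Rightarrow> real"
    and gbar \<gamma> :: "nat \<Rightarrow> real"
    and I :: nat
    and \<beta> :: real
    and x0 :: "real^'m" and s0 :: 's
  assumes P_pos: "\<forall>s s'. P s s' > 0"
    and P_sum: "\<forall>s. (\<Sum>s'\<in>UNIV. P s s') = 1"
    and A_fin: "finite A"
    and X_count: "countable X"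
    and \<zeta>_X: "\<forall>x\<in>X. \<forall>a\<in>A. \<forall>s. \<zeta> x a s \<in> X"
    and r_bdd: "\<exists>B. \<forall>x\<in>X. \<forall>a\<in>A. \<forall>s. \<bar>r x a s\<bar> \<le> B"
    and g_bdd: "\<forall>i<I. \<exists>B. \<forall>x\<in>X. \<forall>a\<in>A. \<forall>s. \<bar>g i x a s\<bar> \<le> B"
    and \<beta>: "0 < \<beta>" "\<beta> < 1"
    and standing: "\<forall>x0'\<in>X. \<forall>s0'. \<exists>a. feasible A p \<zeta> P \<beta> g gbar I x0' s0' a"
    and \<gamma>_nonneg: "\<forall>i<I. \<gamma> i \<ge> 0"
    and x0: "x0 \<in> X"
  shows "(INF \<phi>\<in>posdual (Jset A I). SUP a\<in>Ainf A p \<zeta> x0.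
            ereal (fobj \<zeta> P \<beta> r g I \<gamma> x0 s0 a + \<phi> (gvec A \<zeta> P \<beta> g gbar I x0 a)))
         = Dval A p \<zeta> P \<beta> r g gbar I \<gamma> x0 s0"
proof -
  interpret dsetup P A X \<zeta> p r g gbar \<gamma> I \<beta> x0 s0
    using P_pos P_sum A_fin \<zeta>_X r_bdd g_bdd \<beta> standing \<gamma>_nonneg x0 by unfold_locales auto
  let ?LHS = "(INF \<phi>\<in>posdual (Jset A I). SUP a\<in>Ainf A p \<zeta> x0.
            ereal (fobj \<zeta> P \<beta> r g I \<gamma> x0 s0 a + \<phi> (gvec A \<zeta> P \<beta> g gbar I x0 a)))"
  have le1: "?LHS \<le> Dval A p \<zeta> P \<beta> r g gbar I \<gamma> x0 s0"
    unfolding Dval_def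
  proof (rule INF_greatest)
    fix lam assume lam: "lam \<in> LamSet A I P \<beta> s0"
    have "?LHS \<le> (SUP a\<in>Ainf A p \<zeta> x0. ereal (fobj \<zeta> P \<beta> r g I \<gamma> x0 s0 a + phi_of lam (gvec A \<zeta> P \<beta> g gbar I x0 a)))"
      by (rule INF_lower[OF phi_of_posdual[OF lam]])
    also have "\<dots> = (SUP a\<in>Ainf A p \<zeta> x0. ereal (Lagr \<zeta> P \<beta> r g gbar I \<gamma> x0 s0 a lam))"
      by (rule SUP_cong[OF refl]) (simp add: Lagr_phi[OF _ lam])
    finally show "?LHS \<le> (SUP a\<in>Ainf A p \<zeta> x0. ereal (Lagr \<zeta> P \<beta> r g gbar I \<gamma> x0 s0 a lam))" .
  qed
  have le2: "Dval A p \<zeta> P \<beta> r g gbar I \<gamma> x0 s0 \<le> ?LHS"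
  proof (rule INF_greatest)
    fix \<phi> :: "(('s list \<times> (real^'n) list) \<times> nat \<Rightarrow> real) \<Rightarrow> real"
    assume ph: "\<phi> \<in> posdual (Jset A I)"
    have "Dval A p \<zeta> P \<beta> r g gbar I \<gamma> x0 s0 \<le> (SUP a\<in>Ainf A p \<zeta> x0. ereal (Lagr \<zeta> P \<beta> r g gbar I \<gamma> x0 s0 a (lamF \<phi>)))"
      unfolding Dval_def by (rule INF_lower[OF lamF_Lam[OF ph]])
    also have "\<dots> \<le> (SUP a\<in>Ainf A p \<zeta> x0. ereal (fobj \<zeta> P \<beta> r g I \<gamma> x0 s0 a + \<phi> (gvec A \<zeta> P \<beta> g gbar I x0 a)))"
      by (rule SUP_least) (rule Lagr_le_SUP[OF ph])
    finally show "Dval A p \<zeta> P \<beta> r g gbar I \<gamma> x0 s0 \<le> (SUP a\<in>Ainf A p \<zeta> x0. ereal (fobj \<zeta> P \<beta> r g I \<gamma> x0 s0 a + \<phi> (gvec A \<zeta> P \<beta> g gbar I x0 a)))" .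
  qed
  show ?thesis using le1 le2 by (rule antisym)
qed

end
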